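(* Let $p$ be a prime, $q=p^r$, $\mathscr{C}\subseteq\mathbb{F}_q^n$ a linear code over $\mathbb{F}_q$ of dimension $k$ ($1\le k<n$), $\mathscr{D}\subseteq\mathbb{F}_{q^k}^m$ a linear code over $\mathbb{F}_{q^k}$ of dimension $s$ ($1\le s<m$) such that for each $1\le i\le m$ some codeword has $i$-th coordinate $1$, $\kappa:\mathbb{F}_{q^k}\to\mathcal{L}(\mathscr{C},\mathbb{F}_p)$ an $\mathbb{F}_p$-linear isomorphism, $f_\lambda=\kappa(\lambda)$, and $Q=\operatorname{span}\{\Phi_\Lambda:\Lambda\in\mathscr{D}\}$ the stabilizer code described in the context, with minimum distance $\delta$. If $d(\mathscr{C})\le d(\mathscr{D})$, then $\delta=d(\mathscr{C})$.
   Context: $\zeta=e^{2\pi i/p}$; $\operatorname{tr}:\mathbb{F}_q\to\mathbb{F}_p$ the trace. $\mathcal{L}(\mathscr{C},\mathbb{F}_p)$ is the space of $\mathbb{F}_p$-linear maps $\mathscr{C}\to\mathbb{F}_p$. $\phi_\lambda=q^{-k/2}\sum_{\mathbf{c}\in\mathscr{C}}\zeta^{f_\lambda(\mathbf{c})}|\mathbf{c}\rangle$, $\Phi_\Lambda=\phi_{\lambda_1}\otimes\cdots\otimes\phi_{\lambda_m}$ in $(\mathbb{C}^q)^{\otimes nm}$ (orthonormal basis $|\mathbf{x}\rangle$, $\mathbf{x}\in\mathbb{F}_q^{nm}$). $d(\mathscr{C})$, $d(\mathscr{D})$ are minimum Hamming distances. Errors: $X(a)|x\rangle=|x+a\rangle$,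 $Z(b)|x\rangle=\zeta^{\operatorname{tr}(bx)}|x\rangle$, tensored to $X(\mathbf{a}),Z(\mathbf{b})$; error group $\mathcal{P}_{nm}=\{\omega^cX(\mathbf{a})Z(\mathbf{b})\}$ with $\omega=\zeta,c\in\mathbb{F}_p$ ($p$ odd) or $\omega=i,c\in\{0,1,2,3\}$ ($p=2$); weight of $\omega^cX(\mathbf{a})Z(\mathbf{b})$ is $\#\{j:(a_j,b_j)\ne(0,0)\}$. With $\mathcal{S}=\{E\in\mathcal{P}_{nm}:Ev=v\ \forall v\in Q\}$, $Q$ is a stabilizer code (i.e. $Q$ is the common fixed space of $\mathcal{S}$), and its minimum distance is $\delta=\min\{\operatorname{wt}(E):E\in C_{\mathcal{P}_{nm}}(\mathcal{S})\setminus\mathcal{S}\mathcal{Z}(\mathcal{P}_{nm})\}$, where $\mathcal{Z}(\mathcal{P}_{nm})$ is the set of scalar elements. *)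

theory Defs
  imports "HOL-Analysis.Analysis" "HOL-Library.Function_Algebras"
begin

definition vecs :: "nat \<Rightarrow> (nat \<Rightarrow> 'a::zero) set" where
  "vecs n = {v. \<forall>i. n \<le> i \<longrightarrow> v i = 0}"

definition fscale :: "'a::times \<Rightarrow> (nat \<Rightarrow> 'a) \<Rightarrow> (nat \<Rightarrow> 'a)" where
  "fscale c v = (\<lambda>i. c * v i)"

definition linear_code :: "nat \<Rightarrow> nat \<Rightarrow> (nat \<Rightarrow> 'a::field) set \<Rightarrow> bool" where
  "linear_code n k C \<longleftrightarrow> C \<subseteq> vecs n \<and> module.subspace fscale C
      \<and> vector_space.dim fscale C = k"

definition hdist :: "nat \<Rightarrow> (nat \<Rightarrow> 'a) \<Rightarrow> (nat \<Rightarrow> 'a) \<Rightarrow> nat" where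
  "hdist n x y = card {i. i < n \<and> x i \<noteq> y i}"

definition min_dist :: "nat \<Rightarrow> (nat \<Rightarrow> 'a) set \<Rightarrow> nat" where
  "min_dist n C = Min {hdist n x y | x y. x \<in> C \<and> y \<in> C \<and> x \<noteq> y}"

definition Fp :: "nat \<Rightarrow> 'a::field set" where
  "Fp p = {of_nat j | j. j < p}"

definition fp_nat :: "nat \<Rightarrow> 'a::field \<Rightarrow> nat" where
  "fp_nat p t = (THE j. j < p \<and> of_nat j = t)"

definition zeta_pow :: "nat \<Rightarrow> 'a::field \<Rightarrow> complex" where
  "zeta_pow p t = cis (2 * pi * real (fp_nat p t) / real p)"

definition tr :: "nat \<Rightarrow> nat \<Rightarrow> 'a::field \<Rightarrow> 'a" where
  "tr p r x = (\<Sum>i<r. x ^ (p ^ i))"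

text \<open>L(C, F_p): F_p-linear maps C -> F_p (taken extensionally 0 outside C).\<close>
definition lin_fun :: "nat \<Rightarrow> (nat \<Rightarrow> 'a::field) set \<Rightarrow> ((nat \<Rightarrow> 'a) \<Rightarrow> 'a) set" where
  "lin_fun p C = {f. (\<forall>c\<in>C. f c \<in> Fp p)
      \<and> (\<forall>c\<in>C. \<forall>c'\<in>C. f (c + c') = f c + f c')
      \<and> (\<forall>a\<in>Fp p. \<forall>c\<in>C. f (fscale a c) = a * f c)
      \<and> (\<forall>c. c \<notin> C \<longrightarrow> f c = 0)}"

definition phi :: "nat \<Rightarrow> nat \<Rightarrow> (nat \<Rightarrow> 'a::{field,finite}) set
    \<Rightarrow> ('b \<Rightarrow> (nat \<Rightarrow> 'a) \<Rightarrow> 'a) \<Rightarrow> 'b \<Rightarrow> (nat \<Rightarrow> 'a) \<Rightarrow> complex" where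
  "phi p k C \<kappa> l = (\<lambda>c. if c \<in> C then
      complex_of_real (real CARD('a) powr (- real k / 2)) * zeta_pow p (\<kappa> l c) else 0)"

definition blk :: "nat \<Rightarrow> nat \<Rightarrow> (nat \<Rightarrow> 'a::zero) \<Rightarrow> (nat \<Rightarrow> 'a)" where
  "blk n j x = (\<lambda>i. if i < n then x (j * n + i) else 0)"

text \<open>Phi_Lambda = phi_{lambda_1} (x) ... (x) phi_{lambda_m}, as a function on the basis F_q^{nm}.\<close>
definition Phi :: "nat \<Rightarrow> nat \<Rightarrow> nat \<Rightarrow> nat \<Rightarrow> (nat \<Rightarrow> 'a::{field,finite}) set
    \<Rightarrow> ('b \<Rightarrow> (nat \<Rightarrow> 'a) \<Rightarrow> 'a) \<Rightarrow> (nat \<Rightarrow> 'b) \<Rightarrow> (nat \<Rightarrow> 'a) \<Rightarrow> complex" where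
  "Phi p n k m C \<kappa> \<Lambda> = (\<lambda>x. if x \<in> vecs (n * m)
      then (\<Prod>j<m. phi p k C \<kappa> (\<Lambda> j) (blk n j x)) else 0)"

definition cscale :: "complex \<Rightarrow> ('x \<Rightarrow> complex) \<Rightarrow> ('x \<Rightarrow> complex)" where
  "cscale c v = (\<lambda>x. c * v x)"

definition Qcode :: "nat \<Rightarrow> nat \<Rightarrow> nat \<Rightarrow> nat \<Rightarrow> (nat \<Rightarrow> 'a::{field,finite}) set
    \<Rightarrow> (nat \<Rightarrow> 'b) set \<Rightarrow> ('b \<Rightarrow> (nat \<Rightarrow> 'a) \<Rightarrow> 'a) \<Rightarrow> ((nat \<Rightarrow> 'a) \<Rightarrow> complex) set" where
  "Qcode p n k m C D \<kappa> = module.span cscale (Phi p n k m C \<kappa> ` D)"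

text \<open>The Hilbert space (C^q)^{(x) N}: complex functions on F_q^N.\<close>
definition hilb :: "nat \<Rightarrow> ((nat \<Rightarrow> 'a::zero) \<Rightarrow> complex) set" where
  "hilb N = {v. \<forall>x. x \<notin> vecs N \<longrightarrow> v x = 0}"

definition omega :: "nat \<Rightarrow> complex" where
  "omega p = (if p = 2 then \<i> else cis (2 * pi / real p))"

definition crange :: "nat \<Rightarrow> nat set" where
  "crange p = (if p = 2 then {..<4} else {..<p})"

text \<open>Elements omega^c X(a) Z(b) of P_N, encoded by (c, a, b).\<close>
definition pauli :: "nat \<Rightarrow> nat \<Rightarrow> (nat \<times> (nat \<Rightarrow> 'a::zero) \<times> (nat \<Rightarrow> 'a)) set" where
  "pauli p N = {(c, a, b). c \<in> crange p \<and> a \<in> vecs N \<and> b \<in> vecs N}"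

text \<open>Action: (omega^c X(a) Z(b) v)(y) = omega^c zeta^{sum_j tr(b_j (y_j - a_j))} v(y - a),
  using X(a)|x> = |x+a>, Z(b)|x> = zeta^{sum_j tr(b_j x_j)}|x>.\<close>
definition pauli_op :: "nat \<Rightarrow> nat \<Rightarrow> nat \<Rightarrow> nat \<times> (nat \<Rightarrow> 'a::field) \<times> (nat \<Rightarrow> 'a)
    \<Rightarrow> ((nat \<Rightarrow> 'a) \<Rightarrow> complex) \<Rightarrow> ((nat \<Rightarrow> 'a) \<Rightarrow> complex)" where
  "pauli_op p r N E v = (case E of (c, a, b) \<Rightarrow>
     (\<lambda>y. omega p ^ c * (\<Prod>j<N. zeta_pow p (tr p r (b j * (y j - a j)))) * v (y - a)))"

definition pweight :: "nat \<Rightarrow> nat \<times> (nat \<Rightarrow> 'a::zero) \<times> (nat \<Rightarrow> 'a) \<Rightarrow> nat" where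
  "pweight N E = (case E of (c, a, b) \<Rightarrow> card {j. j < N \<and> (a j \<noteq> 0 \<or> b j \<noteq> 0)})"

definition stab :: "nat \<Rightarrow> nat \<Rightarrow> nat \<Rightarrow> ((nat \<Rightarrow> 'a::field) \<Rightarrow> complex) set
    \<Rightarrow> (nat \<times> (nat \<Rightarrow> 'a) \<times> (nat \<Rightarrow> 'a)) set" where
  "stab p r N Q = {E \<in> pauli p N. \<forall>v\<in>Q. pauli_op p r N E v = v}"

definition centr :: "nat \<Rightarrow> nat \<Rightarrow> nat \<Rightarrow> ((nat \<Rightarrow> 'a::field) \<Rightarrow> complex) set
    \<Rightarrow> (nat \<times> (nat \<Rightarrow> 'a) \<times> (nat \<Rightarrow> 'a)) set" where
  "centr p r N Q = {E \<in> pauli p N. \<forall>S\<in>stab p r N Q. \<forall>v\<in>hilb N.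
      pauli_op p r N E (pauli_op p r N S v) = pauli_op p r N S (pauli_op p r N E v)}"

definition scalars :: "nat \<Rightarrow> nat \<Rightarrow> (nat \<times> (nat \<Rightarrow> 'a::zero) \<times> (nat \<Rightarrow> 'a)) set" where
  "scalars p N = {E \<in> pauli p N. fst (snd E) = 0 \<and> snd (snd E) = 0}"

definition stab_scal :: "nat \<Rightarrow> nat \<Rightarrow> nat \<Rightarrow> ((nat \<Rightarrow> 'a::field) \<Rightarrow> complex) set
    \<Rightarrow> (nat \<times> (nat \<Rightarrow> 'a) \<times> (nat \<Rightarrow> 'a)) set" where
  "stab_scal p r N Q = {E \<in> pauli p N. \<exists>S\<in>stab p r N Q. \<exists>Z\<in>scalars p N. \<forall>v\<in>hilb N.
      pauli_op p r N E v = pauli_op p r N S (pauli_op p r N Z v)}"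

definition stab_min_dist :: "nat \<Rightarrow> nat \<Rightarrow> nat \<Rightarrow> ((nat \<Rightarrow> 'a::field) \<Rightarrow> complex) set \<Rightarrow> nat" where
  "stab_min_dist p r N Q = Min (pweight N ` (centr p r N Q - stab_scal p r N Q))"

end

theory Submission
  imports Defs "HOL-Computational_Algebra.Computational_Algebra"
begin

lemma card_of_nat_zero: "of_nat CARD('a::{field,finite}) = (0::'a)"
proof -
  have "(\<Sum>x\<in>(UNIV::'a set). x + 1) = (\<Sum>x\<in>UNIV. x)"
    by (rule sum.reindex_bij_witness[of _ "\<lambda>x. x - 1" "\<lambda>x. x + 1"]) auto
  then show ?thesis by (simp add: sum.distrib)
qed

lemma charp:
  assumes "prime p" "CARD('a::{field,finite}) = p ^ r"
  shows "CHAR('a) = p"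
proof -
  have "CHAR('a) dvd p ^ r"
    using card_of_nat_zero[where 'a='a] assms(2) by (metis of_nat_eq_0_iff_char_dvd)
  moreover have "prime CHAR('a)"
    using finite_imp_CHAR_pos[where 'a='a] prime_CHAR_semidom by auto
  ultimately have "CHAR('a) dvd p" using prime_dvd_power by blast
  then show ?thesis using assms(1) \<open>prime CHAR('a)\<close>
    by (simp add: primes_dvd_imp_eq)
qed

lemma of_nat_p: "CHAR('a::semiring_1) = p \<Longrightarrow> (of_nat p :: 'a) = 0"
  by (subst (asm) eq_commute) simp

lemma of_nat_mod_char:
  assumes "CHAR('a::field) = p"
  shows "(of_nat j :: 'a) = of_nat (j mod p)"
proof -
  have "(of_nat j :: 'a) = of_nat (j mod p) + of_nat (p * (j div p))"
    by (metis mod_mult_div_eq of_nat_add add.commute)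
  also have "(of_nat (p * (j div p)) :: 'a) = 0" using assms of_nat_CHAR by (metis mult_zero_left of_nat_mult)
  finally show ?thesis by simp
qed

lemma of_nat_inj_char:
  assumes "CHAR('a::field) = p" "a < p" "b < p" "(of_nat a :: 'a) = of_nat b"
  shows "a = b"
proof (rule ccontr)
  assume "a \<noteq> b"
  then consider "a < b" | "b < a" by linarith
  then show False
  proof cases
    case 1
    then have "p dvd (b - a)" using assms of_nat_eq_iff_char_dvd by metis
    then have "p \<le> b - a" by (rule dvd_imp_le) (use 1 in auto)
    then show False using assms by linarith
  next
    case 2
    then have "p dvd (a - b)" using assms of_nat_eq_iff_char_dvd by metis
    then have "p \<le> a - b" by (rule dvd_imp_le) (use 2 in auto)
    then show False using assms by linarith
  qed
qed

lemma Fp_eq: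
  assumes "CHAR('a::field) = p" "prime p"
  shows "(Fp p :: 'a set) = range of_nat"
  unfolding Fp_def
proof safe
  fix j assume "j < p" then show "(of_nat j::'a) \<in> range of_nat" by auto
next
  fix j show "\<exists>ja. (of_nat j::'a) = of_nat ja \<and> ja < p"
    using of_nat_mod_char[OF assms(1)] assms(2) prime_gt_0_nat by (intro exI[of _ "j mod p"]) auto
qed

lemma fp_nat_of_nat:
  assumes "CHAR('a::field) = p" "prime p"
  shows "fp_nat p (of_nat j :: 'a) = j mod p"
  unfolding fp_nat_def
proof (rule the_equality)
  show "j mod p < p \<and> (of_nat (j mod p)::'a) = of_nat j"
    using of_nat_mod_char[OF assms(1)] assms(2) prime_gt_0_nat by auto
next
  fix x assume "x < p \<and> (of_nat x::'a) = of_nat j"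
  then show "x = j mod p"
    using of_nat_mod_char[OF assms(1), of j] of_nat_inj_char[OF assms(1)] assms(2) prime_gt_0_nat
    by (metis mod_less_divisor)
qed

lemma zeta_of_nat:
  assumes "CHAR('a::field) = p" "prime p"
  shows "zeta_pow p (of_nat j :: 'a) = cis (2 * pi * real j / real p)"
proof -
  have pp: "real p > 0" using assms(2) prime_gt_0_nat by simp
  have "cis (2 * pi * real j / real p) = cis (2 * pi * real (j mod p) / real p + 2 * pi * real (j div p))"
  proof -
    have "real j = real (j mod p) + real p * real (j div p)"
      by (metis mod_mult_div_eq of_nat_add of_nat_mult add.commute)
    then have "2 * pi * real j / real p = 2 * pi * real (j mod p) / real p + 2 * pi * real (j div p)"
      using pp by (simp add: field_simps)
    then show ?thesis by simp
  qed
  also have "\<dots> = cis (2 * pi * real (j mod p) / real p)"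
    by (simp add: cis_mult[symmetric])
  finally show ?thesis unfolding zeta_pow_def fp_nat_of_nat[OF assms] by simp
qed

lemma zeta_add:
  assumes "CHAR('a::field) = p" "prime p" "s \<in> range of_nat" "t \<in> range of_nat"
  shows "zeta_pow p (s + t :: 'a) = zeta_pow p s * zeta_pow p t"
proof -
  obtain i j where ij: "s = of_nat i" "t = of_nat j" using assms by auto
  have "zeta_pow p (s + t) = zeta_pow p (of_nat (i + j) :: 'a)" using ij by simp
  also have "\<dots> = cis (2 * pi * real (i + j) / real p)" by (rule zeta_of_nat[OF assms(1,2)])
  finally have 1: "zeta_pow p (s + t) = cis (2 * pi * real (i + j) / real p)" .
  have 2: "zeta_pow p s = cis (2 * pi * real i / real p)" using ij zeta_of_nat[OF assms(1,2)] by simp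
  have 3: "zeta_pow p t = cis (2 * pi * real j / real p)" using ij zeta_of_nat[OF assms(1,2)] by simp
  show ?thesis unfolding 1 2 3 by (simp add: cis_mult add_divide_distrib distrib_left)
qed

lemma zeta_0:
  assumes "CHAR('a::field) = p" "prime p"
  shows "zeta_pow p (0 :: 'a) = 1"
  using zeta_of_nat[OF assms, of 0] by simp

lemma zeta_eq1:
  assumes "CHAR('a::field) = p" "prime p" "t \<in> range of_nat" "zeta_pow p (t::'a) = 1"
  shows "t = 0"
proof -
  obtain j where j: "t = of_nat j" using assms by auto
  define i where "i = j mod p"
  have t: "t = of_nat i" using j of_nat_mod_char[OF assms(1)] i_def by simp
  have ip: "i < p" using i_def assms(2) prime_gt_0_nat by simp
  have "cis (2 * pi * real i / real p) = 1" using assms(4) t zeta_of_nat[OF assms(1,2)] by simp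
  then have "cos (2 * pi * real i / real p) = 1" by (metis cis.sel(1) one_complex.sel(1))
  then have "\<exists>z::int. 2 * pi * real i / real p = of_int z * 2 * pi" using cos_one_2pi_int by blast
  then obtain z :: int where z: "2 * pi * real i / real p = of_int z * 2 * pi" by blast
  have pp: "real p > 0" using assms(2) prime_gt_0_nat by simp
  have "real i = z * real p" using z pp by (simp add: field_simps)
  have z0: "z \<le> 0"
  proof (rule ccontr)
    assume "\<not> z \<le> 0"
    then have "(1::real) \<le> of_int z" by simp
    then have "real p \<le> of_int z * real p" using pp by simp
    moreover have "real i < real p" using ip by simp
    ultimately show False using \<open>real i = z * real p\<close> by linarith
  qed
  then have "real i \<le> 0" using \<open>real i = z * real p\<close> pp by (simp add: mult_nonpos_nonneg)
  then have "i = 0" by simp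
  then show ?thesis using t by simp
qed

lemma range_of_nat_add: "s \<in> range of_nat \<Longrightarrow> t \<in> range of_nat \<Longrightarrow> s + t \<in> range of_nat"
proof -
  assume "s \<in> range of_nat" "t \<in> range of_nat"
  then obtain i j where "s = of_nat i" "t = of_nat j" by auto
  then have "s + t = of_nat (i + j)" by simp
  then show ?thesis by blast
qed

lemma range_of_nat_mult: "s \<in> range of_nat \<Longrightarrow> t \<in> range of_nat \<Longrightarrow> s * t \<in> range of_nat"
proof -
  assume "s \<in> range of_nat" "t \<in> range of_nat"
  then obtain i j where "s = of_nat i" "t = of_nat j" by auto
  then have "s * t = of_nat (i * j)" by simp
  then show ?thesis by blast
qed

lemma range_of_nat_0: "0 \<in> range of_nat"
  by (metis of_nat_0 rangeI)

lemma range_of_nat_uminus: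
  assumes "CHAR('a::field) = p" "prime p" "(t::'a) \<in> range of_nat"
  shows "- t \<in> range of_nat"
proof -
  obtain j where j: "t = of_nat j" using assms by auto
  have "j \<le> p * j" using prime_gt_0_nat[OF assms(2)] by simp
  then have "(of_nat (p * j - j) :: 'a) = of_nat (p * j) - of_nat j"
    by (rule of_nat_diff)
  also have "\<dots> = - t" using j of_nat_p[OF assms(1)] by simp
  finally show ?thesis by (metis rangeI)
qed

lemma range_of_nat_diff:
  assumes "CHAR('a::field) = p" "prime p" "(s::'a) \<in> range of_nat" "t \<in> range of_nat"
  shows "s - t \<in> range of_nat"
  using range_of_nat_add[OF assms(3) range_of_nat_uminus[OF assms(1,2,4)]] by simp

lemma range_of_nat_sum: "(\<And>i. i \<in> I \<Longrightarrow> f i \<in> range of_nat) \<Longrightarrow> sum f I \<in> range of_nat"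
  by (induction I rule: infinite_finite_induct) (auto intro: range_of_nat_add range_of_nat_0)

lemma zeta_sum:
  assumes "CHAR('a::field) = p" "prime p" "\<And>i. i \<in> I \<Longrightarrow> (f i :: 'a) \<in> range of_nat"
  shows "(\<Prod>i\<in>I. zeta_pow p (f i)) = zeta_pow p (sum f I)"
  using assms(3)
proof (induction I rule: infinite_finite_induct)
  case (infinite A) then show ?case using zeta_0[OF assms(1,2)] by simp
next
  case empty then show ?case using zeta_0[OF assms(1,2)] by simp
next
  case (insert x F)
  have "f x \<in> range of_nat" "sum f F \<in> range of_nat" using insert.prems by (auto intro: range_of_nat_sum)
  then show ?case using zeta_add[OF assms(1,2), of "f x" "sum f F"] insert by simp
qed

lemma zeta_uminus:
  assumes "CHAR('a::field) = p" "prime p" "(t::'a) \<in> range of_nat"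
  shows "zeta_pow p (- t) * zeta_pow p t = 1"
  using zeta_add[OF assms(1,2) range_of_nat_uminus[OF assms] assms(3)] zeta_0[OF assms(1,2)] by simp


lemma pow_card: "(x::'a::{field,finite}) ^ CARD('a) = x"
proof (cases "x = 0")
  case False
  have "x * (\<Prod>y\<in>UNIV-{0}. x * y) = x * x ^ (card (UNIV :: 'a set) - 1) * \<Prod>(UNIV-{0})"
    by (simp add: prod.distrib mult_ac)
  also have "x * x ^ (card (UNIV :: 'a set) - 1) = x ^ Suc (card (UNIV :: 'a set) - 1)"
    by (subst power_Suc) auto
  also have "Suc (card (UNIV :: 'a set) - 1) = card (UNIV :: 'a set)"
    using finite_UNIV_card_ge_0[where ?'a = 'a] by simp
  also have "(\<Prod>y\<in>UNIV-{0}. x * y) = (\<Prod>y\<in>UNIV-{0}. y)"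
    by (rule prod.reindex_bij_witness[of _ "\<lambda>y. y / x" "\<lambda>y. x * y"]) (use False in auto)
  finally show ?thesis
    by simp
qed (use finite_UNIV_card_ge_0[where ?'a = 'a] in auto)

lemma frob:
  assumes "CHAR('a::field) = p" "prime p"
  shows "((x::'a) + y) ^ (p ^ i) = x ^ (p ^ i) + y ^ (p ^ i)"
  using freshmans_dream'[of "p ^ i" i x y] assms by simp

lemma tr_add:
  assumes "CHAR('a::field) = p" "prime p"
  shows "tr p r ((x::'a) + y) = tr p r x + tr p r y"
  unfolding tr_def by (simp add: frob[OF assms] sum.distrib)

lemma tr_0: "prime p \<Longrightarrow> tr p r (0::'a::field) = 0"
proof -
  assume "prime p"
  then have "p ^ i > 0" for i using prime_gt_0_nat by simp
  then show ?thesis unfolding tr_def by (simp add: zero_power)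
qed

lemma tr_uminus:
  assumes "CHAR('a::field) = p" "prime p"
  shows "tr p r (- (x::'a)) = - tr p r x"
  proof -
  have "tr p r (- x + x) = tr p r (- x) + tr p r x" by (rule tr_add[OF assms])
  then have "tr p r (- x) + tr p r x = 0" using tr_0[OF assms(2), of r] by (metis add.left_inverse)
  then show ?thesis by (simp add: eq_neg_iff_add_eq_0)
qed

lemma tr_diff:
  assumes "CHAR('a::field) = p" "prime p"
  shows "tr p r ((x::'a) - y) = tr p r x - tr p r y"
  using tr_add[OF assms, where x=x and y="-y"] tr_uminus[OF assms] by simp

lemma tr_sum:
  assumes "CHAR('a::field) = p" "prime p"
  shows "tr p r (sum (f :: 'c \<Rightarrow> 'a) I) = (\<Sum>i\<in>I. tr p r (f i))"
  by (induction I rule: infinite_finite_induct) (auto simp: tr_0[OF assms(2)] tr_add[OF assms])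

lemma ofnat_pow_p:
  assumes "CHAR('a::field) = p" "prime p"
  shows "(of_nat j :: 'a) ^ p = of_nat j"
proof (induction j)
  case 0 then show ?case using prime_gt_0_nat[OF assms(2)] by simp
next
  case (Suc j)
  have "(of_nat (Suc j) :: 'a) ^ p = (of_nat j + 1) ^ (p ^ 1)" by (simp add: add.commute)
  also have "\<dots> = of_nat j ^ p + 1" unfolding frob[OF assms] by simp
  finally show ?case using Suc by simp
qed

lemma range_pow_p:
  assumes "CHAR('a::field) = p" "prime p" "(t::'a) \<in> range of_nat"
  shows "t ^ (p ^ i) = t"
proof (induction i)
  case 0 then show ?case by simp
next
  case (Suc i)
  have "t ^ (p ^ Suc i) = (t ^ (p ^ i)) ^ p" by (simp only: power_mult[symmetric] power_Suc2)
  then show ?case using Suc ofnat_pow_p[OF assms(1,2)] assms(3) by auto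
qed

lemma tr_smul:
  assumes "CHAR('a::field) = p" "prime p" "(t::'a) \<in> range of_nat"
  shows "tr p r (t * x) = t * tr p r x"
  unfolding tr_def by (simp add: power_mult_distrib range_pow_p[OF assms] sum_distrib_left)

lemma Fp_roots:
  assumes "CHAR('a::field) = p" "prime p" "(y::'a) ^ p = y"
  shows "y \<in> range of_nat"
proof -
  define P :: "'a poly" where "P = monom 1 p - [:0, 1:]"
  have p1: "p > 1" using assms(2) prime_gt_1_nat by simp
  have "coeff [:0, 1:] p = (0::'a)" using p1 by (cases p) (auto simp: coeff_pCons split: nat.split)
  then have cP: "coeff P p = 1" unfolding P_def by simp
  then have P0: "P \<noteq> 0" by auto
  have dP: "degree P \<le> p" unfolding P_def
    by (rule degree_diff_le) (use p1 in \<open>auto intro: degree_monom_le simp: degree_pCons_eq_if\<close>)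
  have evP: "poly P x = x ^ p - x" for x unfolding P_def by (simp add: poly_monom)
  define R where "R = {x. poly P x = 0}"
  have fR: "finite R" unfolding R_def using poly_roots_finite[OF P0] .
  have cR: "card R \<le> p" unfolding R_def using card_poly_roots_bound[OF P0] dP by linarith
  have sub: "(of_nat ` {..<p} :: 'a set) \<subseteq> R"
    unfolding R_def evP using ofnat_pow_p[OF assms(1,2)] by auto
  have inj: "inj_on (of_nat :: nat \<Rightarrow> 'a) {..<p}"
    by (rule inj_onI) (use of_nat_inj_char[OF assms(1)] in auto)
  have "card (of_nat ` {..<p} :: 'a set) = p" using card_image[OF inj] by simp
  then have "(of_nat ` {..<p} :: 'a set) = R"
    using card_subset_eq[OF fR sub] cR by (metis card_mono fR le_antisym sub)
  moreover have "y \<in> R" unfolding R_def evP using assms(3) by simp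
  ultimately show ?thesis by auto
qed

lemma tr_in:
  assumes "CHAR('a::{field,finite}) = p" "prime p" "CARD('a) = p ^ r"
  shows "tr p r (x::'a) \<in> range of_nat"
proof (rule Fp_roots[OF assms(1,2)])
  have xr: "x ^ (p ^ r) = x" using pow_card[of x] assms(3) by simp
  have "tr p r x ^ p = (\<Sum>i<r. (x ^ (p ^ i)) ^ p)"
    unfolding tr_def by (rule freshmans_dream_sum) (use assms(1,2) in auto)
  also have "\<dots> = (\<Sum>i<r. x ^ (p ^ Suc i))"
    by (simp only: power_mult[symmetric] power_Suc2)
  also have "\<dots> = tr p r x"
  proof -
    have "(\<Sum>i<Suc r. x ^ (p ^ i)) = x ^ (p ^ 0) + (\<Sum>i<r. x ^ (p ^ Suc i))"
      by (rule sum.lessThan_Suc_shift)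
    moreover have "(\<Sum>i<Suc r. x ^ (p ^ i)) = (\<Sum>i<r. x ^ (p ^ i)) + x ^ (p ^ r)"
      by simp
    ultimately show ?thesis unfolding tr_def using xr by simp
  qed
  finally show "tr p r x ^ p = tr p r x" .
qed

lemma tr_nonzero:
  assumes "CHAR('a::{field,finite}) = p" "prime p" "CARD('a) = p ^ r"
  shows "\<exists>x::'a. tr p r x \<noteq> 0"
proof (rule ccontr)
  assume "\<not> ?thesis"
  then have all0: "\<And>x::'a. tr p r x = 0" by simp
  have p1: "p > 1" using assms(2) prime_gt_1_nat by simp
  have r0: "r \<noteq> 0"
  proof
    assume "r = 0"
    then have "CARD('a) = 1" using assms(3) by simp
    moreover have "card {0::'a, 1} = 2" by simp
    moreover have "card {0::'a, 1} \<le> CARD('a)" by (rule card_mono) auto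
    ultimately show False by simp
  qed
  define P :: "'a poly" where "P = (\<Sum>i<r. monom 1 (p ^ i))"
  have evP: "poly P x = tr p r x" for x unfolding P_def tr_def by (simp add: poly_sum poly_monom)
  have inj: "p ^ i = p ^ (r - 1) \<longleftrightarrow> i = r - 1" for i using p1 by (simp add: power_inject_exp)
  have "coeff P (p ^ (r - 1)) = (\<Sum>i<r. if p ^ i = p ^ (r - 1) then 1 else 0)"
    by (simp only: P_def coeff_sum coeff_monom)
  also have "\<dots> = (\<Sum>i<r. if i = r - 1 then 1 else 0)"
    by (rule sum.cong) (use inj in auto)
  also have "\<dots> = 1" using r0 by (subst sum.delta) auto
  finally have P0: "P \<noteq> 0" by auto
  have dP: "degree P \<le> p ^ (r - 1)" unfolding P_def
  proof (rule degree_sum_le)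
    fix i assume "i \<in> {..<r}"
    then have "p ^ i \<le> p ^ (r - 1)" using p1 by (intro power_increasing) auto
    then show "degree (monom (1::'a) (p ^ i)) \<le> p ^ (r - 1)" using degree_monom_le order.trans by blast
  qed simp
  have "card {x::'a. poly P x = 0} \<le> p ^ (r - 1)" using card_poly_roots_bound[OF P0] dP by linarith
  moreover have "{x::'a. poly P x = 0} = UNIV" using evP all0 by auto
  moreover have "p ^ (r - 1) < p ^ r" using p1 r0 by simp
  ultimately show False using assms(3) by simp
qed


definition pairing_ok :: "nat \<Rightarrow> 'v::ab_group_add set \<Rightarrow> 'w::ab_group_add set \<Rightarrow> ('v \<Rightarrow> 'w \<Rightarrow> 'a::field) \<Rightarrow> bool" where
  "pairing_ok p V W pair \<longleftrightarrow> finite V \<and> finite W \<and> 0 \<in> V \<and> 0 \<in> W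
    \<and> (\<forall>x\<in>V. \<forall>y\<in>V. x + y \<in> V) \<and> (\<forall>x\<in>W. \<forall>y\<in>W. x + y \<in> W)
    \<and> (\<forall>x\<in>V. \<forall>x'\<in>V. \<forall>y\<in>W. pair (x + x') y = pair x y + pair x' y)
    \<and> (\<forall>x\<in>V. \<forall>y\<in>W. \<forall>y'\<in>W. pair x (y + y') = pair x y + pair x y')
    \<and> (\<forall>x\<in>V. \<forall>y\<in>W. pair x y \<in> range of_nat)
    \<and> (\<forall>x\<in>V. (\<forall>y\<in>W. pair x y = 0) \<longrightarrow> x = 0)
    \<and> (\<forall>y\<in>W. (\<forall>x\<in>V. pair x y = 0) \<longrightarrow> y = 0)"

lemma pairing_ok_swap: "pairing_ok p V W pair \<Longrightarrow> pairing_ok p W V (\<lambda>y x. pair x y)"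
  unfolding pairing_ok_def by (elim conjE) (intro conjI; blast)

definition subgrp :: "'v::ab_group_add set \<Rightarrow> 'v set \<Rightarrow> bool" where
  "subgrp V A \<longleftrightarrow> A \<subseteq> V \<and> 0 \<in> A \<and> (\<forall>x\<in>A. \<forall>y\<in>A. x + y \<in> A)"

lemma char_sum:
  fixes h :: "'v::ab_group_add \<Rightarrow> 'a::field"
  assumes "CHAR('a) = p" "prime p" "finite B" "0 \<in> B" "\<forall>x\<in>B. \<forall>y\<in>B. x + y \<in> B"
    "\<forall>x\<in>B. \<forall>y\<in>B. h (x + y) = h x + h y" "\<forall>x\<in>B. h x \<in> range of_nat"
  shows "(\<Sum>x\<in>B. zeta_pow p (h x)) = (if \<forall>x\<in>B. h x = 0 then of_nat (card B) else 0)"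
proof (cases "\<forall>x\<in>B. h x = 0")
  case True
  then show ?thesis using zeta_0[OF assms(1,2)] by simp
next
  case False
  then obtain x0 where x0: "x0 \<in> B" "h x0 \<noteq> 0" by blast
  have inj: "inj_on (\<lambda>x. x + x0) B" by (rule inj_onI) simp
  have sub: "(\<lambda>x. x + x0) ` B \<subseteq> B" using assms(5) x0 by auto
  have "(\<lambda>x. x + x0) ` B = B"
    using card_subset_eq[OF assms(3) sub] card_image[OF inj] by simp
  then have bij: "bij_betw (\<lambda>x. x + x0) B B" using inj by (simp add: bij_betw_def)
  define S where "S = (\<Sum>x\<in>B. zeta_pow p (h x))"
  have "S = (\<Sum>x\<in>B. zeta_pow p (h (x + x0)))"
    unfolding S_def using sum.reindex_bij_betw[OF bij, of "\<lambda>x. zeta_pow p (h x)"] by simp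
  also have "\<dots> = (\<Sum>x\<in>B. zeta_pow p (h x) * zeta_pow p (h x0))"
    by (rule sum.cong) (use assms x0 zeta_add[OF assms(1,2)] in auto)
  also have "\<dots> = S * zeta_pow p (h x0)" unfolding S_def by (simp add: sum_distrib_right)
  finally have "S * (zeta_pow p (h x0) - 1) = 0" by (simp add: algebra_simps)
  moreover have "zeta_pow p (h x0) \<noteq> 1" using zeta_eq1[OF assms(1,2)] assms(7) x0 by blast
  ultimately have "S = 0" by simp
  then show ?thesis unfolding if_not_P[OF False] S_def[symmetric] .
qed

lemma pairing_okD:
  assumes "pairing_ok p V W pair"
  shows "finite V" "finite W" "0 \<in> V" "0 \<in> W"
    "\<And>x y. x \<in> V \<Longrightarrow> y \<in> V \<Longrightarrow> x + y \<in> V" "\<And>x y. x \<in> W \<Longrightarrow> y \<in> W \<Longrightarrow> x + y \<in> W"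
    "\<And>x x' y. x \<in> V \<Longrightarrow> x' \<in> V \<Longrightarrow> y \<in> W \<Longrightarrow> pair (x + x') y = pair x y + pair x' y"
    "\<And>x y y'. x \<in> V \<Longrightarrow> y \<in> W \<Longrightarrow> y' \<in> W \<Longrightarrow> pair x (y + y') = pair x y + pair x y'"
    "\<And>x y. x \<in> V \<Longrightarrow> y \<in> W \<Longrightarrow> pair x y \<in> range of_nat"
    "\<And>x. x \<in> V \<Longrightarrow> (\<forall>y\<in>W. pair x y = 0) \<Longrightarrow> x = 0"
    "\<And>y. y \<in> W \<Longrightarrow> (\<forall>x\<in>V. pair x y = 0) \<Longrightarrow> y = 0"
proof -
  note a = assms[unfolded pairing_ok_def]
  show "finite V" "finite W" "0 \<in> V" "0 \<in> W" using a by simp_all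
  show "\<And>x y. x \<in> V \<Longrightarrow> y \<in> V \<Longrightarrow> x + y \<in> V" using a by simp
  show "\<And>x y. x \<in> W \<Longrightarrow> y \<in> W \<Longrightarrow> x + y \<in> W" using a by simp
  show "\<And>x x' y. x \<in> V \<Longrightarrow> x' \<in> V \<Longrightarrow> y \<in> W \<Longrightarrow> pair (x + x') y = pair x y + pair x' y" using a by simp
  show "\<And>x y y'. x \<in> V \<Longrightarrow> y \<in> W \<Longrightarrow> y' \<in> W \<Longrightarrow> pair x (y + y') = pair x y + pair x y'" using a by simp
  show "\<And>x y. x \<in> V \<Longrightarrow> y \<in> W \<Longrightarrow> pair x y \<in> range of_nat" using a by simp
  show "\<And>x. x \<in> V \<Longrightarrow> (\<forall>y\<in>W. pair x y = 0) \<Longrightarrow> x = 0" using a by simp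
  show "\<And>y. y \<in> W \<Longrightarrow> (\<forall>x\<in>V. pair x y = 0) \<Longrightarrow> y = 0" using a by simp
qed

lemma pair_0_left:
  assumes "pairing_ok p V W pair" "y \<in> W"
  shows "pair 0 y = 0"
proof -
  have "pair (0 + 0) y = pair 0 y + pair 0 y" using pairing_okD(3,7)[OF assms(1)] assms(2) by blast
  then have "pair 0 y + 0 = pair 0 y + pair 0 y" by simp
  then show ?thesis using add_left_cancel by metis
qed

lemma pair_0_right:
  assumes "pairing_ok p V W pair" "x \<in> V"
  shows "pair x 0 = 0"
  using pair_0_left[OF pairing_ok_swap[OF assms(1)] assms(2)] by simp

lemma card_perp:
  fixes pair :: "'v::ab_group_add \<Rightarrow> 'w::ab_group_add \<Rightarrow> 'a::field"
  assumes "CHAR('a) = p" "prime p" "pairing_ok p V W pair" "subgrp V A"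
  shows "card A * card {y\<in>W. \<forall>a\<in>A. pair a y = 0} = card W"
proof -
  note ok = pairing_okD[OF assms(3)]
  have AV: "A \<subseteq> V" "0 \<in> A" "\<forall>x\<in>A. \<forall>y\<in>A. x + y \<in> A" using assms(4) unfolding subgrp_def by auto
  have fA: "finite A" using AV(1) ok finite_subset by blast
  define Ap where "Ap = {y\<in>W. \<forall>a\<in>A. pair a y = 0}"
  have 1: "(\<Sum>y\<in>W. zeta_pow p (pair a y)) = (if a = 0 then of_nat (card W) else 0)" if "a \<in> A" for a
  proof -
    have aV: "a \<in> V" using that AV by auto
    have "(\<Sum>y\<in>W. zeta_pow p (pair a y)) = (if \<forall>y\<in>W. pair a y = 0 then of_nat (card W) else 0)"
      by (rule char_sum[OF assms(1,2) ok(2) ok(4)]) (use ok(6,8,9) aV in blast)+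
    also have "(\<forall>y\<in>W. pair a y = 0) \<longleftrightarrow> a = 0"
      using ok(10) aV pair_0_left[OF assms(3)] by blast
    finally show ?thesis .
  qed
  have 2: "(\<Sum>a\<in>A. zeta_pow p (pair a y)) = (if y \<in> Ap then of_nat (card A) else 0)" if "y \<in> W" for y
  proof -
    have "(\<Sum>a\<in>A. zeta_pow p (pair a y)) = (if \<forall>a\<in>A. pair a y = 0 then of_nat (card A) else 0)"
      by (rule char_sum[OF assms(1,2) fA AV(2,3)]) (use ok(7,9) AV(1) that in blast)+
    then show ?thesis unfolding Ap_def using that by simp
  qed
  have "(\<Sum>a\<in>A. \<Sum>y\<in>W. zeta_pow p (pair a y)) = (\<Sum>a\<in>A. if a = 0 then of_nat (card W) else 0)"
    by (rule sum.cong) (use 1 in auto)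
  also have "\<dots> = of_nat (card W)" using fA AV(2) by (subst sum.delta) auto
  finally have L: "(\<Sum>a\<in>A. \<Sum>y\<in>W. zeta_pow p (pair a y)) = of_nat (card W)" .
  have "(\<Sum>y\<in>W. \<Sum>a\<in>A. zeta_pow p (pair a y)) = (\<Sum>y\<in>W. if y \<in> Ap then of_nat (card A) else 0)"
    by (rule sum.cong) (use 2 in auto)
  also have "\<dots> = (\<Sum>y\<in>{y\<in>W. y \<in> Ap}. of_nat (card A))"
    using ok(2) by (subst sum.inter_filter) auto
  also have "{y\<in>W. y \<in> Ap} = Ap" unfolding Ap_def by auto
  finally have R: "(\<Sum>y\<in>W. \<Sum>a\<in>A. zeta_pow p (pair a y)) = of_nat (card Ap) * of_nat (card A)"
    by simp
  have "(of_nat (card W) :: complex) = of_nat (card Ap) * of_nat (card A)"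
  proof -
    have "(\<Sum>a\<in>A. \<Sum>y\<in>W. zeta_pow p (pair a y)) = (\<Sum>y\<in>W. \<Sum>a\<in>A. zeta_pow p (pair a y))"
      by (rule sum.swap)
    then show ?thesis using L R by simp
  qed
  then have "card W = card Ap * card A" by (metis of_nat_eq_iff of_nat_mult)
  then show ?thesis unfolding Ap_def by simp
qed

lemma double_annih:
  fixes pair :: "'v::ab_group_add \<Rightarrow> 'w::ab_group_add \<Rightarrow> 'a::field"
  assumes "CHAR('a) = p" "prime p" "pairing_ok p V W pair" "subgrp V A"
  shows "{x\<in>V. \<forall>y\<in>W. (\<forall>a\<in>A. pair a y = 0) \<longrightarrow> pair x y = 0} = A"
proof -
  note ok = pairing_okD[OF assms(3)]
  have AV: "A \<subseteq> V" "0 \<in> A" "\<forall>x\<in>A. \<forall>y\<in>A. x + y \<in> A" using assms(4) unfolding subgrp_def by auto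
  define Ap where "Ap = {y\<in>W. \<forall>a\<in>A. pair a y = 0}"
  define App where "App = {x\<in>V. \<forall>y\<in>Ap. pair x y = 0}"
  have c1: "card A * card Ap = card W" unfolding Ap_def by (rule card_perp[OF assms])
  have sV: "subgrp V V" unfolding subgrp_def using ok by auto
  have "{y\<in>W. \<forall>a\<in>V. pair a y = 0} = {0}" using ok pair_0_right[OF assms(3)] by auto
  then have c2: "card V = card W" using card_perp[OF assms(1,2,3) sV] by simp
  have sAp: "subgrp W Ap" unfolding subgrp_def Ap_def
    using ok pair_0_right[OF assms(3)] AV(1) by (auto simp: subset_iff)
  have c3: "card Ap * card App = card V"
    using card_perp[OF assms(1,2) pairing_ok_swap[OF assms(3)] sAp] unfolding App_def by simp
  have "0 \<in> Ap" using sAp unfolding subgrp_def by auto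
  moreover have "finite Ap" unfolding Ap_def using ok by auto
  ultimately have "card Ap > 0" by (auto simp: card_gt_0_iff)
  then have cA: "card App = card A" using c1 c2 c3 by (metis mult.commute mult_left_cancel neq0_conv)
  have sub: "A \<subseteq> App" unfolding App_def Ap_def using AV(1) by auto
  have fApp: "finite App" unfolding App_def using ok by auto
  have "A = App" using card_subset_eq[OF fApp sub] cA by simp
  moreover have "App = {x\<in>V. \<forall>y\<in>W. (\<forall>a\<in>A. pair a y = 0) \<longrightarrow> pair x y = 0}"
    unfolding App_def Ap_def by auto
  ultimately show ?thesis by simp
qed


section \<open>Generic vector and block lemmas\<close>

definition dot :: "nat \<Rightarrow> (nat \<Rightarrow> 'a::comm_ring_1) \<Rightarrow> (nat \<Rightarrow> 'a) \<Rightarrow> 'a" where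
  "dot N x y = (\<Sum>i<N. x i * y i)"

definition place :: "nat \<Rightarrow> nat \<Rightarrow> (nat \<Rightarrow> 'a::zero) \<Rightarrow> (nat \<Rightarrow> 'a)" where
  "place n j c = (\<lambda>i. if j * n \<le> i \<and> i < j * n + n then c (i - j * n) else 0)"

lemma vecs_finite: "finite (vecs n :: (nat \<Rightarrow> 'a::{zero,finite}) set)"
proof -
  have "vecs n \<subseteq> (\<lambda>f i. if i < n then f i else (0::'a)) ` (PiE {..<n} (\<lambda>_. UNIV))"
  proof
    fix v :: "nat \<Rightarrow> 'a" assume "v \<in> vecs n"
    then have "v = (\<lambda>i. if i < n then restrict v {..<n} i else 0)"
      unfolding vecs_def by (auto simp: fun_eq_iff)
    moreover have "restrict v {..<n} \<in> PiE {..<n} (\<lambda>_. UNIV)" by auto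
    ultimately show "v \<in> (\<lambda>f i. if i < n then f i else (0::'a)) ` (PiE {..<n} (\<lambda>_. UNIV))" by blast
  qed
  moreover have "finite (PiE {..<n} (\<lambda>_. (UNIV :: 'a set)))" by (intro finite_PiE) auto
  ultimately show ?thesis using finite_subset by blast
qed

lemma vecs_0 [simp]: "0 \<in> vecs n" unfolding vecs_def by simp
lemma vecs_add: "x \<in> vecs n \<Longrightarrow> y \<in> vecs n \<Longrightarrow> (x::nat \<Rightarrow> 'a::monoid_add) + y \<in> vecs n" unfolding vecs_def by simp
lemma vecs_diff: "x \<in> vecs n \<Longrightarrow> y \<in> vecs n \<Longrightarrow> (x::nat \<Rightarrow> 'a::ab_group_add) - y \<in> vecs n"
  unfolding vecs_def by simp
lemma vecs_mono: "x \<in> vecs n \<Longrightarrow> n \<le> n' \<Longrightarrow> x \<in> vecs n'" unfolding vecs_def by simp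

lemma blk_vecs: "blk n j x \<in> vecs n" unfolding vecs_def blk_def by simp
lemma blk_add: "blk n j (x + y) = blk n j x + blk n j (y::nat \<Rightarrow> 'a::monoid_add)"
  unfolding blk_def by (auto simp: fun_eq_iff)
lemma blk_diff: "blk n j (x - y) = blk n j x - blk n j (y::nat \<Rightarrow> 'a::ab_group_add)"
  unfolding blk_def by (auto simp: fun_eq_iff)
lemma blk_zero [simp]: "blk n j 0 = 0" unfolding blk_def by (auto simp: fun_eq_iff)

lemma sum_split_add: "(\<Sum>i<(a::nat) + b. (f i :: 'b::comm_monoid_add)) = (\<Sum>i<a. f i) + (\<Sum>t<b. f (a + t))"
  by (induction b) (simp_all add: add.assoc)

lemma sum_blocks: "(\<Sum>i<(n::nat) * m. (f i :: 'b::comm_monoid_add)) = (\<Sum>j<m. \<Sum>t<n. f (j * n + t))"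
proof (induction m)
  case 0 then show ?case by simp
next
  case (Suc m)
  have "n * Suc m = n * m + n" by simp
  then have "(\<Sum>i<n * Suc m. f i) = (\<Sum>i<n * m. f i) + (\<Sum>t<n. f (n * m + t))"
    using sum_split_add by metis
  then show ?case using Suc by (simp add: mult.commute)
qed

lemma dot_blocks: "dot (n * m) x y = (\<Sum>j<m. dot n (blk n j x) (blk n j y))"
  unfolding dot_def sum_blocks by (intro sum.cong refl) (simp add: blk_def)

lemma dot_comm: "dot n x y = dot n y x" unfolding dot_def by (simp add: mult.commute)
lemma dot_add_right: "dot n x (y + z) = dot n x y + dot n x z"
  unfolding dot_def by (simp add: distrib_left sum.distrib)
lemma dot_add_left: "dot n (x + y) z = dot n x z + dot n y z"
  unfolding dot_def by (simp add: distrib_right sum.distrib)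
lemma dot_zero_left [simp]: "dot n 0 z = 0" unfolding dot_def by simp
lemma dot_zero_right [simp]: "dot n z 0 = 0" unfolding dot_def by simp

lemma block_index:
  fixes t t' j j' n :: nat
  assumes "t < n" "t' < n" "j * n + t = j' * n + t'"
  shows "j = j'" "t = t'"
proof -
  have "(j * n + t) div n = j" using assms(1) by simp
  moreover have "(j' * n + t') div n = j'" using assms(2) by simp
  ultimately show "j = j'" using assms(3) by metis
  then show "t = t'" using assms by simp
qed

lemma blk_place:
  assumes "c \<in> vecs n"
  shows "blk n j' (place n j c) = (if j' = j then c else 0)"
proof (rule ext)
  fix t
  show "blk n j' (place n j c) t = (if j' = j then c else 0) t"
  proof (cases "t < n")
    case True
    have "j * n \<le> j' * n + t \<and> j' * n + t < j * n + n \<longleftrightarrow> j' = j"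
    proof
      assume h: "j * n \<le> j' * n + t \<and> j' * n + t < j * n + n"
      have "j' * n + t = j * n + (j' * n + t - j * n)" using h by simp
      moreover have "j' * n + t - j * n < n" using h by arith
      ultimately show "j' = j" using block_index(1)[OF True] by metis
    qed (use True in simp)
    then show ?thesis using True unfolding blk_def place_def by auto
  next
    case False
    then show ?thesis using assms unfolding blk_def vecs_def by auto
  qed
qed

lemma place_vecs:
  assumes "j < m"
  shows "place n j c \<in> vecs (n * m)"
proof -
  have "j * n + n \<le> n * m" using assms
    by (metis Suc_leI add.commute mult.commute mult_Suc_right mult_le_mono2)
  then show ?thesis unfolding vecs_def place_def by auto
qed

lemma vecs_blocks_zero:
  assumes "x \<in> vecs (n * m)" "\<And>j. j < m \<Longrightarrow> blk n j x = 0"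
  shows "x = 0"
proof (rule ext)
  fix i
  show "x i = 0 i"
  proof (cases "i < n * m")
    case True
    then have n0: "n > 0" by (cases n) auto
    have jm: "i div n < m" using True by (simp add: div_less_iff_less_mult mult.commute n0)
    have "blk n (i div n) x (i mod n) = x i"
      unfolding blk_def using n0 by (simp add: mult.commute)
    then show ?thesis using assms(2)[OF jm] by (simp add: fun_eq_iff)
  next
    case False then show ?thesis using assms(1) unfolding vecs_def by simp
  qed
qed

lemma dot_place:
  assumes "c \<in> vecs n" "j < m"
  shows "dot (n * m) (place n j c) x = dot n c (blk n j x)"
proof -
  have "dot (n * m) (place n j c) x = (\<Sum>j'<m. dot n (if j' = j then c else 0) (blk n j' x))"
    unfolding dot_blocks blk_place[OF assms(1)] ..
  also have "\<dots> = (\<Sum>j'<m. if j' = j then dot n c (blk n j x) else 0)"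
    by (intro sum.cong) auto
  also have "\<dots> = dot n c (blk n j x)" using assms(2) by simp
  finally show ?thesis .
qed

lemma weight_blk_le:
  assumes "j < m"
  shows "card {t. t < n \<and> blk n j a t \<noteq> 0} \<le> card {i. i < n * m \<and> (a i \<noteq> 0 \<or> b i \<noteq> 0)}"
proof -
  have "(\<lambda>t. j * n + t) ` {t. t < n \<and> blk n j a t \<noteq> 0} \<subseteq> {i. i < n * m \<and> (a i \<noteq> 0 \<or> b i \<noteq> 0)}"
  proof
    fix i assume "i \<in> (\<lambda>t. j * n + t) ` {t. t < n \<and> blk n j a t \<noteq> 0}"
    then obtain t where t: "t < n" "blk n j a t \<noteq> 0" "i = j * n + t" by auto
    have "j * n + n \<le> n * m" using assms
      by (metis Suc_leI add.commute mult.commute mult_Suc_right mult_le_mono2)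
    then show "i \<in> {i. i < n * m \<and> (a i \<noteq> 0 \<or> b i \<noteq> 0)}" using t unfolding blk_def by auto
  qed
  moreover have "inj_on (\<lambda>t. j * n + t) {t. t < n \<and> blk n j a t \<noteq> 0}" by (rule inj_onI) simp
  moreover have "finite {i. i < n * m \<and> (a i \<noteq> 0 \<or> b i \<noteq> 0)}" by simp
  ultimately show ?thesis using card_inj_on_le by blast
qed

section \<open>Minimum distance facts\<close>

lemma hdist_le: "hdist n x y \<le> n"
proof -
  have "card {i. i < n \<and> x i \<noteq> y i} \<le> card {..<n}" by (rule card_mono) auto
  then show ?thesis unfolding hdist_def by simp
qed

lemma md_set_finite: "finite {hdist n x y | x y. x \<in> C \<and> y \<in> C \<and> x \<noteq> y}"
  by (rule finite_subset[of _ "{..n}"]) (auto simp: hdist_le)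

lemma hdist_0: "hdist n c 0 = card {i. i < n \<and> c i \<noteq> 0}"
  unfolding hdist_def by simp

lemma min_dist_le_weight:
  assumes "0 \<in> C" "c \<in> C" "c \<noteq> 0"
  shows "min_dist n C \<le> card {i. i < n \<and> c i \<noteq> 0}"
proof -
  have "hdist n c 0 \<in> {hdist n x y | x y. x \<in> C \<and> y \<in> C \<and> x \<noteq> y}" using assms by blast
  then show ?thesis unfolding min_dist_def hdist_0[symmetric] using md_set_finite by (rule Min_le[rotated])
qed

lemma min_dist_attained:
  fixes C :: "(nat \<Rightarrow> 'a::ab_group_add) set"
  assumes "\<And>x y. x \<in> C \<Longrightarrow> y \<in> C \<Longrightarrow> x - y \<in> C" "c \<in> C" "c \<noteq> 0" "0 \<in> C"
  shows "\<exists>c0\<in>C. c0 \<noteq> 0 \<and> card {i. i < n \<and> c0 i \<noteq> 0} = min_dist n C"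
proof -
  have ne: "{hdist n x y | x y. x \<in> C \<and> y \<in> C \<and> x \<noteq> y} \<noteq> {}" using assms by blast
  have "min_dist n C \<in> {hdist n x y | x y. x \<in> C \<and> y \<in> C \<and> x \<noteq> y}"
    unfolding min_dist_def using Min_in[OF md_set_finite ne] .
  then obtain x y where xy: "x \<in> C" "y \<in> C" "x \<noteq> y" "min_dist n C = hdist n x y" by blast
  have "x - y \<in> C" using assms(1) xy by blast
  moreover have "x - y \<noteq> 0" using xy by simp
  moreover have "{i. i < n \<and> (x - y) i \<noteq> 0} = {i. i < n \<and> x i \<noteq> y i}" by auto
  ultimately show ?thesis using xy unfolding hdist_def by metis
qed

lemma module_cscale: "module (cscale :: complex \<Rightarrow> ('x \<Rightarrow> complex) \<Rightarrow> _)"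
  by unfold_locales (auto simp: cscale_def fun_eq_iff algebra_simps)

lemma vs_fscale: "vector_space (fscale :: 'a::field \<Rightarrow> (nat \<Rightarrow> 'a) \<Rightarrow> _)"
  by unfold_locales (auto simp: fscale_def fun_eq_iff algebra_simps)

lemma module_fscale: "module (fscale :: 'a::field \<Rightarrow> (nat \<Rightarrow> 'a) \<Rightarrow> _)"
  by unfold_locales (auto simp: fscale_def fun_eq_iff algebra_simps)

lemma linear_codeD:
  assumes "linear_code n k C"
  shows "C \<subseteq> vecs n" "0 \<in> C" "\<And>x y. x \<in> C \<Longrightarrow> y \<in> C \<Longrightarrow> x + y \<in> C"
    "\<And>a x. x \<in> C \<Longrightarrow> fscale a x \<in> C" "vector_space.dim fscale C = k"
proof -
  note a = assms[unfolded linear_code_def module.subspace_def[OF module_fscale]]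
  show "C \<subseteq> vecs n" "0 \<in> C" "vector_space.dim fscale C = k" using a by simp_all
  show "\<And>x y. x \<in> C \<Longrightarrow> y \<in> C \<Longrightarrow> x + y \<in> C" using a by simp
  show "\<And>a x. x \<in> C \<Longrightarrow> fscale a x \<in> C" using a by simp
qed

lemma linear_code_diff:
  assumes "linear_code n k C" "x \<in> C" "y \<in> C"
  shows "x - y \<in> C"
proof -
  have "fscale (-1) y \<in> C" using linear_codeD(4)[OF assms(1) assms(3)] .
  moreover have "fscale (-1) y = - y" unfolding fscale_def by (simp add: fun_eq_iff)
  ultimately show ?thesis using linear_codeD(3)[OF assms(1) assms(2)] by (metis diff_conv_add_uminus)
qed

lemma linear_code_nonzero:
  fixes C :: "(nat \<Rightarrow> 'a::field) set"
  assumes "linear_code n k C" "k \<ge> 1"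
  shows "\<exists>c\<in>C. c \<noteq> 0"
proof (rule ccontr)
  assume "\<not> ?thesis"
  then have "C = {0}" using linear_codeD(2)[OF assms(1)] by auto
  then have "module.span fscale C = module.span fscale ({} :: (nat \<Rightarrow> 'a) set)"
  proof -
    have "fscale k (0::nat \<Rightarrow> 'a) = 0" for k by (simp add: fscale_def fun_eq_iff)
    then have "module.span fscale {0::nat \<Rightarrow> 'a} = {0}"
      using module.span_singleton[OF module_fscale, of 0] by auto
    moreover have "module.span fscale ({} :: (nat \<Rightarrow> 'a) set) = {0}"
      using module.span_empty[OF module_fscale] by simp
    ultimately show ?thesis using \<open>C = {0}\<close> by simp
  qed
  then have "vector_space.dim fscale C = card {}"
    using vector_space.dim_eq_card[OF vs_fscale, of "{}" C] module.independent_empty[OF module_fscale] by simp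
  then have "vector_space.dim fscale C = 0" by simp
  then show False using linear_codeD(5)[OF assms(1)] assms(2) by simp
qed


definition Zp :: "nat \<Rightarrow> nat \<Rightarrow> nat \<Rightarrow> (nat \<Rightarrow> 'a::field) \<Rightarrow> (nat \<Rightarrow> 'a) \<Rightarrow> complex" where
  "Zp p r N b z = (\<Prod>j<N. zeta_pow p (tr p r (b j * z j)))"

lemma omega_nz: "omega p \<noteq> 0"
  unfolding omega_def by auto

lemma pauli_op_eq:
  "pauli_op p r N (c, a, b) v = (\<lambda>y. omega p ^ c * Zp p r N b (y - a) * v (y - a))"
  unfolding pauli_op_def Zp_def by (simp add: fun_diff_def)

context
  fixes p r :: nat
  assumes prime: "prime p" and card: "CARD('a::{field,finite}) = p ^ r"
begin

lemma chr: "CHAR('a) = p" using charp[OF prime card] .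

lemma trF: "tr p r (x::'a) \<in> range of_nat" using tr_in[OF chr prime card] .

lemma Zp_zero_z: "Zp p r N b (0::nat \<Rightarrow> 'a) = 1"
  proof -
  have "tr p r (0::'a) = 0" by (rule tr_0[OF prime])
  then show ?thesis unfolding Zp_def using zeta_0[OF chr prime] by simp
qed

lemma Zp_zero_b: "Zp p r N 0 (z::nat \<Rightarrow> 'a) = 1"
  proof -
  have "tr p r (0::'a) = 0" by (rule tr_0[OF prime])
  then show ?thesis unfolding Zp_def using zeta_0[OF chr prime] by simp
qed

lemma Zp_add: "Zp p r N b ((u::nat \<Rightarrow> 'a) + w) = Zp p r N b u * Zp p r N b w"
proof -
  have "zeta_pow p (tr p r (b j * (u + w) j)) = zeta_pow p (tr p r (b j * u j)) * zeta_pow p (tr p r (b j * w j))" for j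
    by (simp add: distrib_left tr_add[OF chr prime] zeta_add[OF chr prime trF trF])
  then show ?thesis unfolding Zp_def by (simp add: prod.distrib)
qed

lemma Zp_dot: "Zp p r N b (z::nat \<Rightarrow> 'a) = zeta_pow p (tr p r (dot N b z))"
  unfolding Zp_def dot_def tr_sum[OF chr prime]
  using zeta_sum[OF chr prime, where I="{..<N}" and f="\<lambda>i. tr p r (b i * z i)"] trF by simp

lemma zeta_tr_eq1: "zeta_pow p (tr p r (x::'a)) = 1 \<Longrightarrow> tr p r x = 0"
  using zeta_eq1[OF chr prime trF] .

lemma comm_lemma:
  assumes "(c, a, b) \<in> centr p r N Q" "(c', a', b') \<in> stab p r N Q"
  shows "Zp p r N b (a'::nat \<Rightarrow> 'a) = Zp p r N b' a"
proof -
  define v0 :: "(nat \<Rightarrow> 'a) \<Rightarrow> complex" where "v0 = (\<lambda>x. if x = 0 then 1 else 0)"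
  have v0h: "v0 \<in> hilb N" unfolding v0_def hilb_def by auto
  have "pauli_op p r N (c, a, b) (pauli_op p r N (c', a', b') v0)
        = pauli_op p r N (c', a', b') (pauli_op p r N (c, a, b) v0)"
    using assms v0h unfolding centr_def by blast
  then have "pauli_op p r N (c, a, b) (pauli_op p r N (c', a', b') v0) (a + a')
        = pauli_op p r N (c', a', b') (pauli_op p r N (c, a, b) v0) (a + a')" by simp
  then have "omega p ^ c * Zp p r N b a' * (omega p ^ c' * Zp p r N b' 0 * 1)
        = omega p ^ c' * Zp p r N b' a * (omega p ^ c * Zp p r N b 0 * 1)"
    unfolding pauli_op_eq v0_def by (simp add: algebra_simps)
  then show ?thesis using omega_nz by (simp add: Zp_zero_z)
qed

end


lemma field_two_ne_one [simp]: "(2::'a::field) \<noteq> 1"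
  by (metis add_cancel_right_right one_add_one zero_neq_one)

locale setting =
  fixes p r n k m s :: nat
    and C :: "(nat \<Rightarrow> 'a::{field,finite}) set"
    and D :: "(nat \<Rightarrow> 'b::{field,finite}) set"
    and \<kappa> :: "'b \<Rightarrow> (nat \<Rightarrow> 'a) \<Rightarrow> 'a"
  assumes prime: "prime p"
    and card: "CARD('a) = p ^ r"
    and cardb: "CARD('b) = CARD('a) ^ k"
    and k1: "1 \<le> k" and kn: "k < n"
    and s1: "1 \<le> s" and sm: "s < m"
    and LC: "linear_code n k C"
    and LD: "linear_code m s D"
    and D1: "\<forall>i<m. \<exists>\<Lambda>\<in>D. \<Lambda> i = 1"
    and bij: "bij_betw \<kappa> UNIV (lin_fun p C)"
    and kadd: "\<forall>l u. \<kappa> (l + u) = (\<lambda>c. \<kappa> l c + \<kappa> u c)"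
    and ksc: "\<forall>j<p. \<forall>l. \<kappa> (of_nat j * l) = (\<lambda>c. of_nat j * \<kappa> l c)"
    and md: "min_dist n C \<le> min_dist m D"
begin

abbreviation "Cm \<equiv> {x \<in> vecs (n * m). \<forall>j<m. blk n j x \<in> C}"
abbreviation "lin_tr \<beta> \<equiv> (\<lambda>x. if x \<in> C then tr p r (dot n \<beta> x) else 0)"
abbreviation "pairD \<Lambda> x \<equiv> (\<Sum>j<m. \<kappa> (\<Lambda> j) (blk n j x))"

lemma cp: "CHAR('a) = p" using chr[OF prime card] .
lemma n0: "n > 0" using kn by simp
lemma m0: "m > 0" using sm by simp

lemma CV: "C \<subseteq> vecs n" using linear_codeD(1)[OF LC] .
lemma C0: "0 \<in> C" using linear_codeD(2)[OF LC] .
lemma Cadd: "x \<in> C \<Longrightarrow> y \<in> C \<Longrightarrow> x + y \<in> C" using linear_codeD(3)[OF LC] .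
lemma Cfscale: "x \<in> C \<Longrightarrow> fscale a x \<in> C" using linear_codeD(4)[OF LC] .
lemma Cdiff: "x \<in> C \<Longrightarrow> y \<in> C \<Longrightarrow> x - y \<in> C" using linear_code_diff[OF LC] .

lemma DV: "D \<subseteq> vecs m" using linear_codeD(1)[OF LD] .
lemma D0: "0 \<in> D" using linear_codeD(2)[OF LD] .
lemma Dadd: "x \<in> D \<Longrightarrow> y \<in> D \<Longrightarrow> x + y \<in> D" using linear_codeD(3)[OF LD] .
lemma Dfscale: "x \<in> D \<Longrightarrow> fscale a x \<in> D" using linear_codeD(4)[OF LD] .

lemma lfD:
  assumes "f \<in> lin_fun p C"
  shows "\<And>c. c \<in> C \<Longrightarrow> f c \<in> range of_nat"
    "\<And>c c'. c \<in> C \<Longrightarrow> c' \<in> C \<Longrightarrow> f (c + c') = f c + f c'"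
    "\<And>c. c \<notin> C \<Longrightarrow> f c = 0"
proof -
  note a = assms[unfolded lin_fun_def Fp_eq[OF cp prime]]
  show "\<And>c. c \<in> C \<Longrightarrow> f c \<in> range of_nat" using a by simp
  show "\<And>c c'. c \<in> C \<Longrightarrow> c' \<in> C \<Longrightarrow> f (c + c') = f c + f c'" using a by simp
  show "\<And>c. c \<notin> C \<Longrightarrow> f c = 0" using a by simp
qed

lemma lf0: "f \<in> lin_fun p C \<Longrightarrow> f 0 = 0"
  using lfD(2)[of f 0 0] C0 by simp

lemma lfdiff: "f \<in> lin_fun p C \<Longrightarrow> x \<in> C \<Longrightarrow> y \<in> C \<Longrightarrow> f (x - y) = f x - f y"
  using lfD(2)[of f "x - y" y] Cdiff by simp

lemma k_lin: "\<kappa> l \<in> lin_fun p C" using bij unfolding bij_betw_def by auto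

lemma k0: "\<kappa> 0 = (\<lambda>c. 0)"
proof -
  have "\<kappa> (0 + 0) = (\<lambda>c. \<kappa> 0 c + \<kappa> 0 c)" using kadd by blast
  then have "\<kappa> 0 c = \<kappa> 0 c + \<kappa> 0 c" for c by (metis add_0)
  then show ?thesis by (auto simp: fun_eq_iff)
qed

lemma k_inj: "\<kappa> l = \<kappa> l' \<Longrightarrow> l = l'"
  using bij unfolding bij_betw_def inj_on_def by blast

lemma k_surj: "f \<in> lin_fun p C \<Longrightarrow> \<kappa> (inv_into UNIV \<kappa> f) = f"
  using bij by (simp add: bij_betw_inv_into_right)

lemma k_at0: "\<kappa> l 0 = 0" using lf0[OF k_lin] .
lemma k_F: "c \<in> C \<Longrightarrow> \<kappa> l c \<in> range of_nat" using lfD(1)[OF k_lin] .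

lemma dot_fscale: "dot n \<beta> (fscale a c) = a * dot n \<beta> c"
  unfolding dot_def fscale_def by (simp add: sum_distrib_left mult_ac)

lemma lin_tr_lin: "lin_tr \<beta> \<in> lin_fun p C"
  unfolding lin_fun_def Fp_eq[OF cp prime]
proof (intro CollectI conjI ballI allI impI)
  fix c assume "c \<in> C" then show "lin_tr \<beta> c \<in> range of_nat" using trF[OF prime card] by simp
next
  fix c c' assume "c \<in> C" "c' \<in> C"
  then show "lin_tr \<beta> (c + c') = lin_tr \<beta> c + lin_tr \<beta> c'"
    using Cadd by (simp add: dot_add_right tr_add[OF cp prime])
next
  fix a c assume "(a::'a) \<in> range of_nat" "c \<in> C"
  then show "lin_tr \<beta> (fscale a c) = a * lin_tr \<beta> c"
    using Cfscale by (simp add: dot_fscale tr_smul[OF cp prime])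
next
  fix c assume "c \<notin> C" then show "lin_tr \<beta> c = 0" by simp
qed

lemma exists_lf:
  assumes "c \<in> C" "c \<noteq> 0"
  shows "\<exists>\<beta>. lin_tr \<beta> c \<noteq> 0"
proof -
  obtain i where i: "c i \<noteq> 0" using assms(2) by (auto simp: fun_eq_iff)
  have "c \<in> vecs n" using assms(1) CV by blast
  have "i < n"
  proof (rule ccontr)
    assume "\<not> i < n"
    then have "c i = 0" using \<open>c \<in> vecs n\<close> unfolding vecs_def by simp
    then show False using i by simp
  qed
  obtain t :: 'a where t: "tr p r t \<noteq> 0" using tr_nonzero[OF cp prime card] by (elim exE)
  define \<beta> where "\<beta> = (\<lambda>j. if j = i then t / c i else 0)"
  have "dot n \<beta> c = (\<Sum>j<n. if j = i then t / c i * c i else 0)"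
    unfolding dot_def \<beta>_def by (intro sum.cong) auto
  also have "\<dots> = t / c i * c i" using \<open>i < n\<close> by (subst sum.delta) auto
  also have "\<dots> = t" using i by simp
  finally have "dot n \<beta> c = t" .
  then have "lin_tr \<beta> c = tr p r t" using assms(1) by simp
  then show ?thesis using t by (intro exI[of _ \<beta>]) simp
qed

lemma Cm_add: "x \<in> Cm \<Longrightarrow> y \<in> Cm \<Longrightarrow> x + y \<in> Cm"
  by (auto simp: vecs_add blk_add Cadd)
lemma Cm_diff: "x \<in> Cm \<Longrightarrow> y \<in> Cm \<Longrightarrow> x - y \<in> Cm"
  by (auto simp: vecs_diff blk_diff Cdiff)
lemma Cm_0: "0 \<in> Cm" using C0 by simp

lemma blk_short:
  assumes "c \<in> vecs n"
  shows "blk n j c = (if j = 0 then c else 0)"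
proof (rule ext)
  fix t
  show "blk n j c t = (if j = 0 then c else 0) t"
  proof (cases "t < n")
    case True
    show ?thesis
    proof (cases "j = 0")
      case False
      then have "1 \<le> j" by simp
      then have "n \<le> j * n" using mult_le_mono1[of 1 j n] by simp
      then have "n \<le> j * n + t" using le_add1 order_trans by blast
      then show ?thesis using assms True False unfolding blk_def vecs_def by auto
    qed (use True in \<open>simp add: blk_def\<close>)
  next
    case False
    then show ?thesis using assms unfolding blk_def vecs_def by auto
  qed
qed

lemma C_in_Cm: "c \<in> C \<Longrightarrow> c \<in> Cm"
proof -
  assume c: "c \<in> C"
  then have cv: "c \<in> vecs n" using CV by auto
  have "c \<in> vecs (n * m)" using vecs_mono[OF cv] m0 by simp
  moreover have "blk n j c \<in> C" for j using blk_short[OF cv] c C0 by simp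
  ultimately show "c \<in> Cm" by simp
qed

lemma place_Cm: "c \<in> C \<Longrightarrow> j < m \<Longrightarrow> place n j c \<in> Cm"
  using place_vecs[of j m n c] blk_place[of c n] CV C0 by auto

lemma Phi_eq:
  "Phi p n k m C \<kappa> \<Lambda> y = (if y \<in> Cm then complex_of_real (real CARD('a) powr (- real k / 2)) ^ m * (\<Prod>j<m. zeta_pow p (\<kappa> (\<Lambda> j) (blk n j y))) else 0)"
proof (cases "y \<in> Cm")
  case True
  then have "Phi p n k m C \<kappa> \<Lambda> y = (\<Prod>j<m. complex_of_real (real CARD('a) powr (- real k / 2)) * zeta_pow p (\<kappa> (\<Lambda> j) (blk n j y)))"
    unfolding Phi_def phi_def by (intro if_P[THEN trans] prod.cong) auto
  also have "\<dots> = complex_of_real (real CARD('a) powr (- real k / 2)) ^ m * (\<Prod>j<m. zeta_pow p (\<kappa> (\<Lambda> j) (blk n j y)))"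
    by (simp add: prod.distrib)
  finally show ?thesis using True by simp
next
  case False
  show ?thesis
  proof (cases "y \<in> vecs (n * m)")
    case True
    then obtain j where j: "j < m" "blk n j y \<notin> C" using False by auto
    have "(\<Prod>j<m. phi p k C \<kappa> (\<Lambda> j) (blk n j y)) = 0"
    proof (rule prod_zero)
      show "\<exists>a\<in>{..<m}. phi p k C \<kappa> (\<Lambda> a) (blk n a y) = 0"
        using j by (intro bexI[of _ j]) (auto simp: phi_def)
    qed simp
    then show ?thesis using True False unfolding Phi_def by auto
  next
    case False
    then show ?thesis unfolding Phi_def by auto
  qed
qed

lemma Kc_nz: "complex_of_real (real CARD('a) powr (- real k / 2)) \<noteq> 0"
proof -
  have "real CARD('a) > 0" by simp
  then show ?thesis by simp
qed

lemma Phi_hilb: "Phi p n k m C \<kappa> \<Lambda> \<in> hilb (n * m)"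
  unfolding hilb_def Phi_def by auto

lemma Phi_Q: "\<Lambda> \<in> D \<Longrightarrow> Phi p n k m C \<kappa> \<Lambda> \<in> Qcode p n k m C D \<kappa>"
  unfolding Qcode_def by (rule module.span_base[OF module_cscale]) auto

lemma Phi_at0: "Phi p n k m C \<kappa> \<Lambda> 0 = complex_of_real (real CARD('a) powr (- real k / 2)) ^ m"
  using Phi_eq[of \<Lambda> 0] Cm_0 k_at0 zeta_0[OF cp prime] by simp

lemma Phi_zero_eq: "Phi p n k m C \<kappa> 0 y = (if y \<in> Cm then complex_of_real (real CARD('a) powr (- real k / 2)) ^ m else 0)"
  using Phi_eq[of 0 y] k0 zeta_0[OF cp prime] by simp

end


lemma dot_single: "i < n \<Longrightarrow> dot n x (\<lambda>j. if j = i then u else 0) = x i * u"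
proof -
  assume "i < n"
  have "dot n x (\<lambda>j. if j = i then u else 0) = (\<Sum>j<n. if j = i then x i * u else 0)"
    unfolding dot_def by (intro sum.cong) auto
  also have "\<dots> = x i * u" using \<open>i < n\<close> by (subst sum.delta) auto
  finally show ?thesis .
qed

context setting
begin

lemma Zp_dot': "Zp p r N b (z::nat \<Rightarrow> 'a) = zeta_pow p (tr p r (dot N b z))"
  using Zp_dot[OF prime card] .

lemma pauli_0_in: "a \<in> vecs N \<Longrightarrow> b \<in> vecs N \<Longrightarrow> (0, a, b) \<in> pauli p N"
  unfolding pauli_def crange_def using prime_gt_0_nat[OF prime] by auto

lemma span_prop:
  assumes "v \<in> Qcode p n k m C D \<kappa>" "P 0"
    "\<And>c x y. x \<in> Phi p n k m C \<kappa> ` D \<Longrightarrow> P y \<Longrightarrow> P (cscale c x + y)"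
  shows "P v"
  using module.span_induct_alt[OF module_cscale, of v "Phi p n k m C \<kappa> ` D" P] assms
  unfolding Qcode_def by blast

lemma SZ:
  assumes b: "b \<in> vecs (n * m)" and orth: "\<forall>j<m. \<forall>c\<in>C. tr p r (dot n (blk n j b) c) = 0"
  shows "(0, 0, b) \<in> stab p r (n * m) (Qcode p n k m C D \<kappa>)"
proof -
  have base: "Zp p r (n * m) b y * Phi p n k m C \<kappa> \<Lambda> y = Phi p n k m C \<kappa> \<Lambda> y" for \<Lambda> y
  proof (cases "y \<in> Cm")
    case True
    have "tr p r (dot (n * m) b y) = (\<Sum>j<m. tr p r (dot n (blk n j b) (blk n j y)))"
      unfolding dot_blocks tr_sum[OF cp prime] ..
    also have "\<dots> = 0" using True orth by simp
    finally have "Zp p r (n * m) b y = 1" unfolding Zp_dot' using zeta_0[OF cp prime] by simp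
    then show ?thesis by simp
  next
    case False
    show ?thesis unfolding Phi_eq if_not_P[OF False] by simp
  qed
  have "\<forall>y. Zp p r (n * m) b y * v y = v y" if "v \<in> Qcode p n k m C D \<kappa>" for v
    using that
  proof (rule span_prop)
    show "\<forall>y. Zp p r (n * m) b y * (0::(nat \<Rightarrow> 'a) \<Rightarrow> complex) y = 0 y" by simp
  next
    fix c x y
    assume x: "x \<in> Phi p n k m C \<kappa> ` D" and h2: "\<forall>z. Zp p r (n * m) b z * y z = y z"
    show "\<forall>z. Zp p r (n * m) b z * (cscale c x + y) z = (cscale c x + y) z"
    proof
      fix z
      have h1: "Zp p r (n * m) b z * x z = x z" using base x by blast
      have "Zp p r (n * m) b z * (cscale c x + y) z = c * (Zp p r (n * m) b z * x z) + Zp p r (n * m) b z * y z"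
        unfolding cscale_def by (simp add: algebra_simps)
      also have "\<dots> = c * x z + y z" by (simp only: h1 h2[rule_format])
      finally show "Zp p r (n * m) b z * (cscale c x + y) z = (cscale c x + y) z"
        unfolding cscale_def by simp
    qed
  qed
  then show ?thesis unfolding stab_def using pauli_0_in[OF vecs_0 b]
    by (auto simp: pauli_op_eq fun_eq_iff)
qed

lemma SX:
  assumes a: "a \<in> Cm" and orth: "\<forall>\<Lambda>\<in>D. pairD \<Lambda> a = 0"
  shows "(0, a, 0) \<in> stab p r (n * m) (Qcode p n k m C D \<kappa>)"
proof -
  have base: "Phi p n k m C \<kappa> \<Lambda> (y - a) = Phi p n k m C \<kappa> \<Lambda> y" if L: "\<Lambda> \<in> D" for \<Lambda> y
  proof (cases "y \<in> Cm")
    case True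
    then have ya: "y - a \<in> Cm" using Cm_diff a by blast
    have "(\<Prod>j<m. zeta_pow p (\<kappa> (\<Lambda> j) (blk n j (y - a))))
        = (\<Prod>j<m. zeta_pow p (\<kappa> (\<Lambda> j) (blk n j y)) * zeta_pow p (- \<kappa> (\<Lambda> j) (blk n j a)))"
    proof (rule prod.cong)
      fix j assume "j \<in> {..<m}"
      then have bj: "blk n j y \<in> C" "blk n j a \<in> C" using True a by auto
      have "\<kappa> (\<Lambda> j) (blk n j (y - a)) = \<kappa> (\<Lambda> j) (blk n j y) + - \<kappa> (\<Lambda> j) (blk n j a)"
        unfolding blk_diff using lfdiff[OF k_lin bj] by simp
      then show "zeta_pow p (\<kappa> (\<Lambda> j) (blk n j (y - a)))
          = zeta_pow p (\<kappa> (\<Lambda> j) (blk n j y)) * zeta_pow p (- \<kappa> (\<Lambda> j) (blk n j a))"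
        using zeta_add[OF cp prime k_F[OF bj(1)] range_of_nat_uminus[OF cp prime k_F[OF bj(2)]]] by simp
    qed simp
    also have "\<dots> = (\<Prod>j<m. zeta_pow p (\<kappa> (\<Lambda> j) (blk n j y))) * (\<Prod>j<m. zeta_pow p (- \<kappa> (\<Lambda> j) (blk n j a)))"
      by (rule prod.distrib)
    also have "(\<Prod>j<m. zeta_pow p (- \<kappa> (\<Lambda> j) (blk n j a))) = zeta_pow p (\<Sum>j<m. - \<kappa> (\<Lambda> j) (blk n j a))"
      by (rule zeta_sum[OF cp prime]) (use a range_of_nat_uminus[OF cp prime k_F] in auto)
    also have "(\<Sum>j<m. - \<kappa> (\<Lambda> j) (blk n j a)) = - pairD \<Lambda> a" by (simp add: sum_negf)
    also have "\<dots> = 0" using orth L by simp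
    finally have "(\<Prod>j<m. zeta_pow p (\<kappa> (\<Lambda> j) (blk n j (y - a)))) = (\<Prod>j<m. zeta_pow p (\<kappa> (\<Lambda> j) (blk n j y)))"
      unfolding zeta_0[OF cp prime] mult_1_right .
    then show ?thesis unfolding Phi_eq if_P[OF True] if_P[OF ya] by simp
  next
    case False
    have "y - a \<notin> Cm"
    proof
      assume "y - a \<in> Cm"
      then have "y - a + a \<in> Cm" using Cm_add a by blast
      then show False using False by simp
    qed
    show ?thesis unfolding Phi_eq if_not_P[OF \<open>y - a \<notin> Cm\<close>] if_not_P[OF False] ..
  qed
  have "\<forall>y. v (y - a) = v y" if "v \<in> Qcode p n k m C D \<kappa>" for v
    using that
  proof (rule span_prop)
    show "\<forall>y. (0::(nat \<Rightarrow> 'a) \<Rightarrow> complex) (y - a) = 0 y" by simp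
  next
    fix c x and y :: "(nat \<Rightarrow> 'a) \<Rightarrow> complex"
    assume "x \<in> Phi p n k m C \<kappa> ` D" "\<forall>z. y (z - a) = y z"
    then show "\<forall>z. (cscale c x + y) (z - a) = (cscale c x + y) z"
      using base unfolding cscale_def by auto
  qed
  moreover have "a \<in> vecs (n * m)" using a by simp
  ultimately show ?thesis unfolding stab_def using pauli_0_in[OF _ vecs_0]
    by (auto simp: pauli_op_eq fun_eq_iff Zp_zero_b[OF prime card])
qed

end


context setting
begin

lemma pairC_ok: "pairing_ok p (vecs n :: (nat \<Rightarrow> 'a) set) (vecs n) (\<lambda>x y. tr p r (dot n x y))"
proof -
  have nd: "x = 0" if x: "x \<in> vecs n" and h: "\<forall>y\<in>vecs n. tr p r (dot n x y) = 0" for x :: "nat \<Rightarrow> 'a"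
  proof (rule ccontr)
    assume "x \<noteq> 0"
    then obtain i where i: "x i \<noteq> 0" by (auto simp: fun_eq_iff)
    have "i < n"
    proof (rule ccontr)
      assume "\<not> i < n"
      then have "x i = 0" using x unfolding vecs_def by simp
      then show False using i by simp
    qed
    obtain t :: 'a where t: "tr p r t \<noteq> 0" using tr_nonzero[OF cp prime card] by (elim exE)
    define y where "y = (\<lambda>j. if j = i then t / x i else 0)"
    have yv: "y \<in> vecs n" unfolding y_def vecs_def using \<open>i < n\<close> by auto
    have "dot n x y = x i * (t / x i)" unfolding y_def using dot_single[OF \<open>i < n\<close>] .
    also have "\<dots> = t" using i by simp
    finally have "tr p r (dot n x y) \<noteq> 0" using t by simp
    then show False using h yv by blast
  qed
  show ?thesis unfolding pairing_ok_def
  proof (intro conjI ballI impI)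
    show "finite (vecs n :: (nat \<Rightarrow> 'a) set)" by (rule vecs_finite)
  next
    fix x y :: "nat \<Rightarrow> 'a" assume "x \<in> vecs n" "y \<in> vecs n"
    then show "x + y \<in> vecs n" by (rule vecs_add)
  next
    fix x y :: "nat \<Rightarrow> 'a" assume "x \<in> vecs n" "y \<in> vecs n"
    then show "x + y \<in> vecs n" by (rule vecs_add)
  next
    fix x x' y :: "nat \<Rightarrow> 'a"
    show "tr p r (dot n (x + x') y) = tr p r (dot n x y) + tr p r (dot n x' y)"
      by (simp add: dot_add_left tr_add[OF cp prime])
  next
    fix x y y' :: "nat \<Rightarrow> 'a"
    show "tr p r (dot n x (y + y')) = tr p r (dot n x y) + tr p r (dot n x y')"
      by (simp add: dot_add_right tr_add[OF cp prime])
  next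
    fix x y :: "nat \<Rightarrow> 'a"
    show "tr p r (dot n x y) \<in> range of_nat" by (rule trF[OF prime card])
  next
    fix x :: "nat \<Rightarrow> 'a" assume "x \<in> vecs n" "\<forall>y\<in>vecs n. tr p r (dot n x y) = 0"
    then show "x = 0" using nd by blast
  next
    fix y :: "nat \<Rightarrow> 'a" assume "y \<in> vecs n" "\<forall>x\<in>vecs n. tr p r (dot n x y) = 0"
    then show "y = 0" using nd dot_comm by metis
  qed (simp_all add: vecs_finite)
qed

lemma subgrpC: "subgrp (vecs n) C"
  unfolding subgrp_def using CV C0 Cadd by blast

lemma subgrpD: "subgrp (vecs m) D"
  unfolding subgrp_def using DV D0 Dadd by blast

lemma pairD_place:
  assumes "c \<in> C" "j0 < m"
  shows "pairD \<Lambda> (place n j0 c) = \<kappa> (\<Lambda> j0) c"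
proof -
  have cv: "c \<in> vecs n" using assms(1) CV by blast
  have "pairD \<Lambda> (place n j0 c) = (\<Sum>j<m. if j = j0 then \<kappa> (\<Lambda> j0) c else 0)"
    unfolding blk_place[OF cv] by (intro sum.cong) (auto simp: k_at0)
  also have "\<dots> = \<kappa> (\<Lambda> j0) c" using assms(2) by (subst sum.delta) auto
  finally show ?thesis .
qed

lemma pairD_single:
  assumes "j0 < m"
  shows "pairD (\<lambda>j. if j = j0 then l else 0) x = \<kappa> l (blk n j0 x)"
proof -
  have "pairD (\<lambda>j. if j = j0 then l else 0) x = (\<Sum>j<m. if j = j0 then \<kappa> l (blk n j0 x) else 0)"
    by (intro sum.cong) (auto simp: k0)
  also have "\<dots> = \<kappa> l (blk n j0 x)" using assms by (subst sum.delta) auto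
  finally show ?thesis .
qed

lemma pairD_ok: "pairing_ok p (vecs m :: (nat \<Rightarrow> 'b) set) Cm (\<lambda>\<Lambda> x. pairD \<Lambda> x)"
proof -
  have fCm: "finite Cm" using vecs_finite[of "n * m"] by (rule finite_subset[rotated]) auto
  have nd1: "\<Lambda> = 0" if L: "\<Lambda> \<in> vecs m" and h: "\<forall>x\<in>Cm. pairD \<Lambda> x = 0" for \<Lambda> :: "nat \<Rightarrow> 'b"
  proof (rule ext)
    fix j0
    show "\<Lambda> j0 = 0 j0"
    proof (cases "j0 < m")
      case True
      have "\<kappa> (\<Lambda> j0) c = 0" for c
      proof (cases "c \<in> C")
        case True
        have "pairD \<Lambda> (place n j0 c) = 0" using h place_Cm[OF True \<open>j0 < m\<close>] by blast
        then show ?thesis using pairD_place[OF True \<open>j0 < m\<close>] by simp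
      next
        case False
        then show ?thesis using lfD(3)[OF k_lin] by blast
      qed
      then have "\<kappa> (\<Lambda> j0) = \<kappa> 0" unfolding k0 by (simp add: fun_eq_iff)
      then show ?thesis using k_inj by simp
    next
      case False
      then show ?thesis using L unfolding vecs_def by simp
    qed
  qed
  have nd2: "x = 0" if x: "x \<in> Cm" and h: "\<forall>\<Lambda>\<in>vecs m. pairD \<Lambda> x = 0" for x
  proof (rule vecs_blocks_zero)
    show "x \<in> vecs (n * m)" using x by simp
  next
    fix j0 assume j0: "j0 < m"
    show "blk n j0 x = 0"
    proof (rule ccontr)
      assume nz: "blk n j0 x \<noteq> 0"
      have bx: "blk n j0 x \<in> C" using x j0 by simp
      obtain \<beta> where \<beta>: "lin_tr \<beta> (blk n j0 x) \<noteq> 0" using exists_lf[OF bx nz] by blast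
      define l where "l = inv_into UNIV \<kappa> (lin_tr \<beta>)"
      have kl: "\<kappa> l = lin_tr \<beta>" unfolding l_def by (rule k_surj[OF lin_tr_lin])
      have "(\<lambda>j. if j = j0 then l else 0) \<in> vecs m" unfolding vecs_def using j0 by auto
      then have "pairD (\<lambda>j. if j = j0 then l else 0) x = 0" using bspec[OF h] by simp
      then have "\<kappa> l (blk n j0 x) = 0" using pairD_single[OF j0] by simp
      then show False using \<beta> kl by simp
    qed
  qed
  show ?thesis unfolding pairing_ok_def
  proof (intro conjI ballI impI)
    show "finite (vecs m :: (nat \<Rightarrow> 'b) set)" by (rule vecs_finite)
  next
    show "finite Cm" by (rule fCm)
  next
    show "0 \<in> Cm" by (rule Cm_0)
  next
    fix x y :: "nat \<Rightarrow> 'b" assume "x \<in> vecs m" "y \<in> vecs m"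
    then show "x + y \<in> vecs m" by (rule vecs_add)
  next
    fix x y assume "x \<in> Cm" "y \<in> Cm"
    then show "x + y \<in> Cm" by (rule Cm_add)
  next
    fix x x' :: "nat \<Rightarrow> 'b" and y
    show "pairD (x + x') y = pairD x y + pairD x' y"
      using kadd by (simp add: sum.distrib)
  next
    fix x :: "nat \<Rightarrow> 'b" and y y' assume "y \<in> Cm" "y' \<in> Cm"
    then show "pairD x (y + y') = pairD x y + pairD x y'"
      by (simp add: sum.distrib[symmetric] blk_add lfD(2)[OF k_lin])
  next
    fix x :: "nat \<Rightarrow> 'b" and y assume "y \<in> Cm"
    then show "pairD x y \<in> range of_nat"
      by (intro range_of_nat_sum) (auto intro: k_F)
  next
    fix x :: "nat \<Rightarrow> 'b" assume "x \<in> vecs m" "\<forall>y\<in>Cm. pairD x y = 0"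
    then show "x = 0" by (rule nd1)
  next
    fix y assume "y \<in> Cm" "\<forall>x\<in>vecs m. pairD x y = 0"
    then show "y = 0" by (rule nd2)
  qed simp
qed

end


lemma weight_blocks_le:
  fixes a b :: "nat \<Rightarrow> 'a::zero"
  shows "card {j. j < m \<and> blk n j b \<noteq> 0} \<le> card {i. i < n * m \<and> (a i \<noteq> 0 \<or> b i \<noteq> 0)}"
proof -
  define g where "g j = j * n + (SOME t. t < n \<and> b (j * n + t) \<noteq> 0)" for j
  have gp: "(SOME t. t < n \<and> b (j * n + t) \<noteq> 0) < n \<and> b (g j) \<noteq> 0" if j: "j < m" and nz: "blk n j b \<noteq> 0" for j
  proof -
    obtain t where "blk n j b t \<noteq> 0" using nz by (auto simp: fun_eq_iff)
    then have "\<exists>t. t < n \<and> b (j * n + t) \<noteq> 0" unfolding blk_def by (auto split: if_splits)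
    then show ?thesis unfolding g_def by (rule someI_ex)
  qed
  have "g ` {j. j < m \<and> blk n j b \<noteq> 0} \<subseteq> {i. i < n * m \<and> (a i \<noteq> 0 \<or> b i \<noteq> 0)}"
  proof
    fix i assume "i \<in> g ` {j. j < m \<and> blk n j b \<noteq> 0}"
    then obtain j where j: "j < m" "blk n j b \<noteq> 0" "i = g j" by auto
    have "j * n + n \<le> n * m" using j(1)
      by (metis Suc_leI add.commute mult.commute mult_Suc_right mult_le_mono2)
    moreover have "(SOME t. t < n \<and> b (j * n + t) \<noteq> 0) < n" "b (g j) \<noteq> 0" using gp[OF j(1,2)] by auto
    ultimately have "g j < n * m" "b (g j) \<noteq> 0" unfolding g_def by auto
    then show "i \<in> {i. i < n * m \<and> (a i \<noteq> 0 \<or> b i \<noteq> 0)}" using j(3) by simp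
  qed
  moreover have "inj_on g {j. j < m \<and> blk n j b \<noteq> 0}"
  proof (rule inj_onI)
    fix j j' assume h1: "j \<in> {j. j < m \<and> blk n j b \<noteq> 0}" and h2: "j' \<in> {j. j < m \<and> blk n j b \<noteq> 0}"
      and eq: "g j = g j'"
    have t1: "(SOME t. t < n \<and> b (j * n + t) \<noteq> 0) < n" using gp h1 by blast
    have t2: "(SOME t. t < n \<and> b (j' * n + t) \<noteq> 0) < n" using gp h2 by blast
    show "j = j'" by (rule block_index(1)[OF t1 t2 eq[unfolded g_def]])
  qed
  moreover have "finite {i. i < n * m \<and> (a i \<noteq> 0 \<or> b i \<noteq> 0)}" by simp
  ultimately show ?thesis using card_inj_on_le by blast
qed

context setting
begin

abbreviation "QQ \<equiv> Qcode p n k m C D \<kappa>"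

lemma tr0': "tr p r (0::'a) = 0" by (rule tr_0[OF prime])

lemma lower:
  assumes E: "E \<in> centr p r (n * m) QQ - stab_scal p r (n * m) QQ"
  shows "min_dist n C \<le> pweight (n * m) E"
proof (rule ccontr)
  assume "\<not> ?thesis"
  then have lt: "pweight (n * m) E < min_dist n C" by simp
  obtain c a b where Eeq: "E = (c, a, b)" by (cases E) auto
  have Ec: "(c, a, b) \<in> centr p r (n * m) QQ" and Ens: "(c, a, b) \<notin> stab_scal p r (n * m) QQ"
    using E Eeq by auto
  then have Ep: "(c, a, b) \<in> pauli p (n * m)" unfolding centr_def by auto
  then have cr: "c \<in> crange p" and av: "a \<in> vecs (n * m)" and bv: "b \<in> vecs (n * m)"
    unfolding pauli_def by auto
  have W: "card {i. i < n * m \<and> (a i \<noteq> 0 \<or> b i \<noteq> 0)} < min_dist n C"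
    using lt Eeq unfolding pweight_def by simp
  \<comment> \<open>Step 1: a = 0\<close>
  have blkC: "blk n j a \<in> C" if j: "j < m" for j
  proof -
    have "blk n j a \<in> {x \<in> vecs n. \<forall>y\<in>vecs n. (\<forall>c\<in>C. tr p r (dot n c y) = 0) \<longrightarrow> tr p r (dot n x y) = 0}"
    proof (intro CollectI conjI ballI impI)
      show "blk n j a \<in> vecs n" by (rule blk_vecs)
    next
      fix y assume yv: "y \<in> vecs n" and yo: "\<forall>c\<in>C. tr p r (dot n c y) = 0"
      have "\<forall>j'<m. \<forall>c\<in>C. tr p r (dot n (blk n j' (place n j y)) c) = 0"
        unfolding blk_place[OF yv] using yo by (simp add: dot_comm tr0')
      then have S: "(0, 0, place n j y) \<in> stab p r (n * m) QQ"
        using SZ[OF place_vecs[OF j]] by blast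
      have "Zp p r (n * m) b (0::nat \<Rightarrow> 'a) = Zp p r (n * m) (place n j y) a"
        by (rule comm_lemma[OF prime card Ec S])
      then have "Zp p r (n * m) (place n j y) a = 1" using Zp_zero_z[OF prime card] by simp
      then have "zeta_pow p (tr p r (dot (n * m) (place n j y) a)) = 1" by (simp add: Zp_dot')
      then have "tr p r (dot (n * m) (place n j y) a) = 0" by (rule zeta_tr_eq1[OF prime card])
      then show "tr p r (dot n (blk n j a) y) = 0" unfolding dot_place[OF yv j] by (simp add: dot_comm)
    qed
    then show ?thesis unfolding double_annih[OF cp prime pairC_ok subgrpC] .
  qed
  have a0: "a = 0"
  proof (rule vecs_blocks_zero[OF av])
    fix j assume j: "j < m"
    show "blk n j a = 0"
    proof (rule ccontr)
      assume "blk n j a \<noteq> 0"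
      then have "min_dist n C \<le> card {t. t < n \<and> blk n j a t \<noteq> 0}"
        using min_dist_le_weight[OF C0 blkC[OF j]] by blast
      also have "\<dots> \<le> card {i. i < n * m \<and> (a i \<noteq> 0 \<or> b i \<noteq> 0)}" by (rule weight_blk_le[OF j])
      finally show False using W by simp
    qed
  qed
  \<comment> \<open>Step 2: the blocks of b are orthogonal to C\<close>
  define \<mu> where "\<mu> = (\<lambda>j. if j < m then inv_into UNIV \<kappa> (lin_tr (blk n j b)) else 0)"
  have kmu: "\<kappa> (\<mu> j) = lin_tr (blk n j b)" if "j < m" for j
    unfolding \<mu>_def using that k_surj[OF lin_tr_lin] by simp
  have muv: "\<mu> \<in> vecs m" unfolding \<mu>_def vecs_def by simp
  have muD: "\<mu> \<in> D"
  proof -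
    have "\<mu> \<in> {x \<in> vecs m. \<forall>y\<in>Cm. (\<forall>\<Lambda>\<in>D. pairD \<Lambda> y = 0) \<longrightarrow> pairD x y = 0}"
    proof (intro CollectI conjI ballI impI)
      show "\<mu> \<in> vecs m" by (rule muv)
    next
      fix y assume yC: "y \<in> Cm" and yo: "\<forall>\<Lambda>\<in>D. pairD \<Lambda> y = 0"
      have S: "(0, y, 0) \<in> stab p r (n * m) QQ" by (rule SX[OF yC yo])
      have Ec0: "(c, 0, b) \<in> centr p r (n * m) QQ" using Ec a0 by simp
      have "Zp p r (n * m) b y = Zp p r (n * m) 0 (0::nat \<Rightarrow> 'a)"
        by (rule comm_lemma[OF prime card Ec0 S])
      then have "Zp p r (n * m) b y = 1" using Zp_zero_z[OF prime card] by simp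
      then have "zeta_pow p (tr p r (dot (n * m) b y)) = 1" by (simp add: Zp_dot')
      then have t0: "tr p r (dot (n * m) b y) = 0" by (rule zeta_tr_eq1[OF prime card])
      have "pairD \<mu> y = (\<Sum>j<m. tr p r (dot n (blk n j b) (blk n j y)))"
        using yC kmu by (intro sum.cong) auto
      also have "\<dots> = tr p r (dot (n * m) b y)"
        unfolding dot_blocks tr_sum[OF cp prime] ..
      finally show "pairD \<mu> y = 0" using t0 by simp
    qed
    then show ?thesis unfolding double_annih[OF cp prime pairD_ok subgrpD] .
  qed
  have mu0: "\<mu> = 0"
  proof (rule ccontr)
    assume nz: "\<mu> \<noteq> 0"
    have sub: "{j. j < m \<and> \<mu> j \<noteq> 0} \<subseteq> {j. j < m \<and> blk n j b \<noteq> 0}"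
    proof
      fix j assume "j \<in> {j. j < m \<and> \<mu> j \<noteq> 0}"
      then have j: "j < m" "\<mu> j \<noteq> 0" by auto
      have "blk n j b \<noteq> 0"
      proof
        assume b0: "blk n j b = 0"
        have "lin_tr (blk n j b) = (\<lambda>c. 0)" unfolding b0 by (simp add: tr0' fun_eq_iff)
        then have "\<kappa> (\<mu> j) = \<kappa> 0" using kmu[OF j(1)] k0 by simp
        then show False using k_inj j(2) by blast
      qed
      then show "j \<in> {j. j < m \<and> blk n j b \<noteq> 0}" using j by simp
    qed
    have "min_dist m D \<le> card {j. j < m \<and> \<mu> j \<noteq> 0}" by (rule min_dist_le_weight[OF D0 muD nz])
    also have "\<dots> \<le> card {j. j < m \<and> blk n j b \<noteq> 0}" by (rule card_mono[OF _ sub]) simp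
    also have "\<dots> \<le> card {i. i < n * m \<and> (a i \<noteq> 0 \<or> b i \<noteq> 0)}" by (rule weight_blocks_le)
    finally show False using W md by simp
  qed
  have borth: "\<forall>j<m. \<forall>c\<in>C. tr p r (dot n (blk n j b) c) = 0"
  proof (intro allI impI ballI)
    fix j c assume j: "j < m" and c: "c \<in> C"
    have "\<kappa> (\<mu> j) = \<kappa> 0" using mu0 by simp
    then have "lin_tr (blk n j b) = (\<lambda>c. 0)" using kmu[OF j] k0 by simp
    from fun_cong[OF this, of c] show "tr p r (dot n (blk n j b) c) = 0" using c by simp
  qed
  \<comment> \<open>Step 3: E is a scalar times a stabilizer\<close>
  have S: "(0, 0, b) \<in> stab p r (n * m) QQ" by (rule SZ[OF bv borth])
  have Z: "(c, 0, 0) \<in> scalars p (n * m)" unfolding scalars_def pauli_def using cr by simp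
  have "\<forall>v\<in>hilb (n * m). pauli_op p r (n * m) (c, 0, b) v
      = pauli_op p r (n * m) (0, 0, b) (pauli_op p r (n * m) (c, 0, 0) v)"
    by (simp add: pauli_op_eq Zp_zero_b[OF prime card] fun_eq_iff)
  then have "(c, 0, b) \<in> stab_scal p r (n * m) QQ"
    unfolding stab_scal_def using Ep a0 S Z by blast
  then show False using Ens a0 by simp
qed

end


lemma pauli_op_scal: "pauli_op p r N E (\<lambda>y. w * v y) = (\<lambda>y. w * pauli_op p r N E v y)"
  by (cases E) (simp add: pauli_op_eq algebra_simps)

lemma pweight_le: "pweight N E \<le> N"
proof -
  obtain c a b where E: "E = (c, a, b)" by (cases E) auto
  have "card {j. j < N \<and> (a j \<noteq> 0 \<or> b j \<noteq> 0)} \<le> card {..<N}" by (rule card_mono) auto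
  then show ?thesis unfolding pweight_def E by simp
qed

context setting
begin

lemma Phi_c0:
  assumes c0: "c0 \<in> C"
  shows "Phi p n k m C \<kappa> \<Lambda> c0 = complex_of_real (real CARD('a) powr (- real k / 2)) ^ m * zeta_pow p (\<kappa> (\<Lambda> 0) c0)"
proof -
  have cv: "c0 \<in> vecs n" using c0 CV by blast
  have "(\<Prod>j<m. zeta_pow p (\<kappa> (\<Lambda> j) (blk n j c0))) = (\<Prod>j<m. if j = 0 then zeta_pow p (\<kappa> (\<Lambda> 0) c0) else 1)"
    by (intro prod.cong) (auto simp: blk_short[OF cv] k_at0 zeta_0[OF cp prime])
  also have "\<dots> = zeta_pow p (\<kappa> (\<Lambda> 0) c0)" using m0 by simp
  finally show ?thesis unfolding Phi_eq using C_in_Cm[OF c0] by simp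
qed

lemma upper: "\<exists>E \<in> centr p r (n * m) QQ - stab_scal p r (n * m) QQ. pweight (n * m) E = min_dist n C"
proof -
  obtain c1 where c1: "c1 \<in> C" "c1 \<noteq> 0" using linear_code_nonzero[OF LC k1] by blast
  obtain c0 where c0: "c0 \<in> C" "c0 \<noteq> 0" "card {i. i < n \<and> c0 i \<noteq> 0} = min_dist n C"
    using min_dist_attained[OF Cdiff c1 C0] by blast
  have c0v: "c0 \<in> vecs n" using c0 CV by blast
  have c0Cm: "c0 \<in> Cm" using C_in_Cm[OF c0(1)] .
  then have c0nm: "c0 \<in> vecs (n * m)" by simp
  define E0 where "E0 = (0::nat, c0, 0::nat \<Rightarrow> 'a)"
  have Ep: "E0 \<in> pauli p (n * m)" unfolding E0_def using pauli_0_in[OF c0nm vecs_0] .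
  have "{j. j < n * m \<and> (c0 j \<noteq> 0 \<or> (0::nat \<Rightarrow> 'a) j \<noteq> 0)} = {i. i < n \<and> c0 i \<noteq> 0}"
  proof -
    have nm: "n \<le> n * m" using m0 by simp
    have A: "x < n" if "c0 x \<noteq> 0" for x
    proof (rule ccontr)
      assume "\<not> x < n"
      then have "c0 x = 0" using c0v unfolding vecs_def by simp
      then show False using that by simp
    qed
    show ?thesis using A less_le_trans[OF _ nm] by auto
  qed
  then have pw: "pweight (n * m) E0 = min_dist n C" unfolding pweight_def E0_def using c0(3) by simp
  define K where "K = complex_of_real (real CARD('a) powr (- real k / 2)) ^ m"
  have K0: "K \<noteq> 0" unfolding K_def using Kc_nz by simp
  have Zc: "Zp p r (n * m) b' c0 = 1" if S: "(c', a', b') \<in> stab p r (n * m) QQ" for c' a' b'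
  proof -
    let ?P0 = "Phi p n k m C \<kappa> 0"
    have fix0: "pauli_op p r (n * m) (c', a', b') ?P0 = ?P0"
      using S Phi_Q[OF D0] unfolding stab_def by blast
    have "pauli_op p r (n * m) (c', a', b') ?P0 a' = ?P0 a'" using fix0 by simp
    then have h1: "omega p ^ c' * K = ?P0 a'"
      unfolding pauli_op_eq using Zp_zero_z[OF prime card] Phi_zero_eq[of 0] Cm_0 K_def by simp
    have "pauli_op p r (n * m) (c', a', b') ?P0 (a' + c0) = ?P0 (a' + c0)" using fix0 by simp
    then have h2: "omega p ^ c' * Zp p r (n * m) b' c0 * K = ?P0 (a' + c0)"
      unfolding pauli_op_eq using Phi_zero_eq[of c0] c0Cm K_def by simp
    have "a' + c0 \<in> Cm \<longleftrightarrow> a' \<in> Cm"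
    proof
      assume "a' + c0 \<in> Cm" then have "a' + c0 - c0 \<in> Cm" using Cm_diff c0Cm by blast
      then show "a' \<in> Cm" by simp
    qed (use Cm_add c0Cm in blast)
    then have "?P0 (a' + c0) = ?P0 a'" unfolding Phi_zero_eq by simp
    then have "omega p ^ c' * Zp p r (n * m) b' c0 * K = omega p ^ c' * 1 * K" using h1 h2 by simp
    then show ?thesis using K0 omega_nz by simp
  qed
  have Ec: "E0 \<in> centr p r (n * m) QQ"
    unfolding centr_def
  proof (intro CollectI conjI ballI)
    show "E0 \<in> pauli p (n * m)" by (rule Ep)
  next
    fix S and v :: "(nat \<Rightarrow> 'a) \<Rightarrow> complex" assume S: "S \<in> stab p r (n * m) QQ" and v: "v \<in> hilb (n * m)"
    obtain c' a' b' where Seq: "S = (c', a', b')" by (cases S) auto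
    have z: "Zp p r (n * m) b' c0 = 1" using Zc S Seq by blast
    show "pauli_op p r (n * m) E0 (pauli_op p r (n * m) S v) = pauli_op p r (n * m) S (pauli_op p r (n * m) E0 v)"
    proof (rule ext)
      fix y
      have e1: "y - a' = (y - c0 - a') + c0" by (simp add: algebra_simps)
      have e2: "y - a' - c0 = y - c0 - a'" by (simp add: algebra_simps)
      have "Zp p r (n * m) b' (y - a') = Zp p r (n * m) b' (y - c0 - a')"
        unfolding e1 Zp_add[OF prime card] z by simp
      then show "pauli_op p r (n * m) E0 (pauli_op p r (n * m) S v) y = pauli_op p r (n * m) S (pauli_op p r (n * m) E0 v) y"
        unfolding E0_def Seq pauli_op_eq Zp_zero_b[OF prime card] e2 by simp
    qed
  qed
  have Ens: "E0 \<notin> stab_scal p r (n * m) QQ"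
  proof
    assume "E0 \<in> stab_scal p r (n * m) QQ"
    then obtain S Z where S: "S \<in> stab p r (n * m) QQ" and Z: "Z \<in> scalars p (n * m)"
      and eq: "\<forall>v\<in>hilb (n * m). pauli_op p r (n * m) E0 v = pauli_op p r (n * m) S (pauli_op p r (n * m) Z v)"
      unfolding stab_scal_def by blast
    obtain c'' where Zeq: "Z = (c'', 0, 0)" using Z unfolding scalars_def by (cases Z) auto
    define w where "w = omega p ^ c''"
    have key: "Phi p n k m C \<kappa> \<Lambda> 0 = w * Phi p n k m C \<kappa> \<Lambda> c0" if L: "\<Lambda> \<in> D" for \<Lambda>
    proof -
      let ?v = "Phi p n k m C \<kappa> \<Lambda>"
      have "pauli_op p r (n * m) Z ?v = (\<lambda>y. w * ?v y)"
        unfolding Zeq pauli_op_eq w_def Zp_zero_b[OF prime card] by simp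
      moreover have "pauli_op p r (n * m) S ?v = ?v" using S Phi_Q[OF L] unfolding stab_def by blast
      ultimately have "pauli_op p r (n * m) S (pauli_op p r (n * m) Z ?v) = (\<lambda>y. w * ?v y)"
        by (simp add: pauli_op_scal)
      then have "pauli_op p r (n * m) E0 ?v = (\<lambda>y. w * ?v y)" using eq Phi_hilb by simp
      then have "pauli_op p r (n * m) E0 ?v c0 = w * ?v c0" by simp
      then show ?thesis unfolding E0_def pauli_op_eq Zp_zero_b[OF prime card] by simp
    qed
    have "K = w * K" using key[OF D0] Phi_at0 Phi_c0[OF c0(1), of 0] k0 zeta_0[OF cp prime] K_def by simp
    then have w1: "w = 1" using K0 by simp
    obtain \<Lambda>1 where L1: "\<Lambda>1 \<in> D" "\<Lambda>1 0 = 1" using D1 m0 by blast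
    obtain \<beta> where \<beta>: "lin_tr \<beta> c0 \<noteq> 0" using exists_lf[OF c0(1,2)] by blast
    define l where "l = inv_into UNIV \<kappa> (lin_tr \<beta>)"
    have kl: "\<kappa> l = lin_tr \<beta>" unfolding l_def by (rule k_surj[OF lin_tr_lin])
    define \<Lambda> where "\<Lambda> = fscale l \<Lambda>1"
    have LD': "\<Lambda> \<in> D" unfolding \<Lambda>_def by (rule Dfscale[OF L1(1)])
    have L0: "\<Lambda> 0 = l" unfolding \<Lambda>_def fscale_def using L1(2) by simp
    have "K = K * zeta_pow p (\<kappa> l c0)" using key[OF LD'] Phi_at0 Phi_c0[OF c0(1), of \<Lambda>] L0 w1 K_def by simp
    then have "zeta_pow p (\<kappa> l c0) = 1" using K0 by simp
    then have "\<kappa> l c0 = 0" using zeta_eq1[OF cp prime k_F[OF c0(1)]] by blast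
    then show False using kl \<beta> by simp
  qed
  show ?thesis using Ec Ens pw by blast
qed

end


theorem corollary3p4:
  fixes p r n k m s :: nat
    and C :: "(nat \<Rightarrow> 'a::{field,finite}) set"
    and D :: "(nat \<Rightarrow> 'b::{field,finite}) set"
    and \<kappa> :: "'b \<Rightarrow> (nat \<Rightarrow> 'a) \<Rightarrow> 'a"
  assumes "prime p"
    and "CARD('a) = p ^ r"
    and "CARD('b) = CARD('a) ^ k"
    and "1 \<le> k" and "k < n"
    and "1 \<le> s" and "s < m"
    and "linear_code n k C"
    and "linear_code m s D"
    and "\<forall>i<m. \<exists>\<Lambda>\<in>D. \<Lambda> i = 1"
    and "bij_betw \<kappa> UNIV (lin_fun p C)"
    and "\<forall>l u. \<kappa> (l + u) = (\<lambda>c. \<kappa> l c + \<kappa> u c)"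
    and "\<forall>j<p. \<forall>l. \<kappa> (of_nat j * l) = (\<lambda>c. of_nat j * \<kappa> l c)"
    and "min_dist n C \<le> min_dist m D"
  shows "stab_min_dist p r (n * m) (Qcode p n k m C D \<kappa>) = min_dist n C"
proof -
  interpret S: setting p r n k m s C D \<kappa>
    by (rule setting.intro) (rule assms)+
  let ?X = "centr p r (n * m) (Qcode p n k m C D \<kappa>) - stab_scal p r (n * m) (Qcode p n k m C D \<kappa>)"
  have fin: "finite (pweight (n * m) ` ?X)"
    by (rule finite_subset[of _ "{..n * m}"]) (auto simp: pweight_le)
  obtain E where E: "E \<in> ?X" "pweight (n * m) E = min_dist n C" using S.upper by blast
  show ?thesis unfolding stab_min_dist_def
  proof (rule Min_eqI[OF fin])
    fix y assume "y \<in> pweight (n * m) ` ?X"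
    then show "min_dist n C \<le> y" using S.lower by blast
  next
    show "min_dist n C \<in> pweight (n * m) ` ?X" using E by (metis imageI)
  qed
qed


end
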